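(* Let $n\ge2$, let $T_0$ be a tagged $n$-simplex and let $\widehat T$ be a Kuhn simplex. Then every simplex $T$ obtained from $T_0$ by successive applications of Maubach's bisection satisfies $$\gamma(T)\le2\,\gamma(\widehat T)\,\frac{\operatorname{diam}(\widehat T)}{w(\widehat T)}\,\gamma(T_0).$$
   Context: A Kuhn simplex is $[0,e_{\pi(1)},e_{\pi(1)}+e_{\pi(2)},\dots,e_{\pi(1)}+\dots+e_{\pi(n)}]$ for a permutation $\pi$ of $\{1,\dots,n\}$ and unit vectors $e_i$. A tagged $n$-simplex is $[v_0,\dots,v_n]_\gamma$ with tag $\gamma\in\{1,\dots,n\}$; Maubach's bisection: $v'=(v_0+v_\gamma)/2$, $\gamma'=\gamma-1$ if $\gamma\ge2$ and $n$ otherwise, children $[v_0,\dots,v_{\gamma-1},v',v_{\gamma+1},\dots,v_n]_{\gamma'}$ and $[v_1,\dots,v_\gamma,v',v_{\gamma+1},\dots,v_n]_{\gamma'}$. For a simplex $S$: $\gamma(S)=R(S)/r(S)$ with $R(S)$ the diameter of the smallest ball containing $S$, $r(S)$ the diameter of the largest ball contained in $S$; $w(S)=\min_f\sup_{x\in S}\operatorname{dist}(x,f)$ over the $(n-1)$-dimensional faces $f$ of $S$ (minimal height). *)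

theory Defs
  imports "HOL-Analysis.Analysis"
begin

text \<open>A (tagged) n-simplex is represented by its vertex map v (only v 0, ..., v n matter)
  together with its tag.\<close>

type_synonym 'a tsimplex = "(nat \<Rightarrow> 'a) \<times> nat"

definition simplex_set :: "nat \<Rightarrow> (nat \<Rightarrow> 'a::euclidean_space) \<Rightarrow> 'a set" where
  "simplex_set n v = convex hull (v ` {..n})"

definition is_nsimplex :: "nat \<Rightarrow> (nat \<Rightarrow> 'a::euclidean_space) \<Rightarrow> bool" where
  "is_nsimplex n v \<longleftrightarrow> inj_on v {..n} \<and> \<not> affine_dependent (v ` {..n})"

definition is_tagged_nsimplex :: "nat \<Rightarrow> 'a::euclidean_space tsimplex \<Rightarrow> bool" where
  "is_tagged_nsimplex n T \<longleftrightarrow> is_nsimplex n (fst T) \<and> snd T \<in> {1..n}"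

definition new_tag :: "nat \<Rightarrow> nat \<Rightarrow> nat" where
  "new_tag n g = (if g \<ge> 2 then g - 1 else n)"

definition bisect_left :: "nat \<Rightarrow> 'a::euclidean_space tsimplex \<Rightarrow> 'a tsimplex" where
  "bisect_left n T = (let v = fst T; g = snd T; m = (1/2) *\<^sub>R (v 0 + v g)
     in ((\<lambda>i. if i = g then m else v i), new_tag n g))"

definition bisect_right :: "nat \<Rightarrow> 'a::euclidean_space tsimplex \<Rightarrow> 'a tsimplex" where
  "bisect_right n T = (let v = fst T; g = snd T; m = (1/2) *\<^sub>R (v 0 + v g)
     in ((\<lambda>i. if i < g then v (Suc i) else if i = g then m else v i), new_tag n g))"

inductive_set maubach_desc :: "nat \<Rightarrow> 'a::euclidean_space tsimplex \<Rightarrow> 'a tsimplex set"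
  for n :: nat and T0 :: "'a tsimplex" where
  base: "T0 \<in> maubach_desc n T0"
| left: "T \<in> maubach_desc n T0 \<Longrightarrow> bisect_left n T \<in> maubach_desc n T0"
| right: "T \<in> maubach_desc n T0 \<Longrightarrow> bisect_right n T \<in> maubach_desc n T0"

text \<open>Kuhn simplex: vertices 0, e_{pi 1}, e_{pi 1} + e_{pi 2}, ...; pi is a bijection
  from {1..n} onto the standard basis.\<close>

definition kuhn_vertices :: "(nat \<Rightarrow> 'a::euclidean_space) \<Rightarrow> nat \<Rightarrow> 'a" where
  "kuhn_vertices \<pi> k = (\<Sum>j\<in>{1..k}. \<pi> j)"

text \<open>R(S): diameter of the smallest ball containing S; r(S): diameter of the largest ball
  contained in S; gamma(S) = R(S)/r(S).\<close>

definition outer_diam :: "'a::euclidean_space set \<Rightarrow> real" where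
  "outer_diam S = Inf {2 * r | c r. S \<subseteq> cball c r}"

definition inner_diam :: "'a::euclidean_space set \<Rightarrow> real" where
  "inner_diam S = Sup {2 * r | c r. 0 \<le> r \<and> cball c r \<subseteq> S}"

definition shape_reg :: "'a::euclidean_space set \<Rightarrow> real" where
  "shape_reg S = outer_diam S / inner_diam S"

definition min_height :: "nat \<Rightarrow> (nat \<Rightarrow> 'a::euclidean_space) \<Rightarrow> real" where
  "min_height n v = Min ((\<lambda>i. SUP x\<in>simplex_set n v. infdist x (convex hull (v ` ({..n} - {i})))) ` {..n})"

end

theory Submission
  imports Defs
begin

definition cc :: "nat \<Rightarrow> nat \<Rightarrow> real" where "cc g j = (if j \<le> g then 1 else 1/2)"

definition zv :: "(nat \<Rightarrow> real) \<Rightarrow> real \<Rightarrow> (nat \<Rightarrow> nat) \<Rightarrow> (nat \<Rightarrow> real) \<Rightarrow> nat \<Rightarrow> nat \<Rightarrow> nat \<Rightarrow> real" where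
  "zv ofs h \<tau> \<epsilon> g j k = ofs k + h * cc g j * (if \<tau> k \<le> j then \<epsilon> k else 0)"

definition fib :: "nat \<Rightarrow> (nat \<Rightarrow> nat) \<Rightarrow> nat \<Rightarrow> nat set" where
  "fib n \<tau> m = {k\<in>{1..n}. \<tau> k = m}"

definition XX :: "nat \<Rightarrow> (nat \<Rightarrow> real) \<Rightarrow> real \<Rightarrow> (nat \<Rightarrow> nat) \<Rightarrow> (nat \<Rightarrow> real) \<Rightarrow> (nat \<Rightarrow> real) \<Rightarrow> nat \<Rightarrow> real" where
  "XX n ofs h \<tau> \<epsilon> x m = (\<Sum>k\<in>fib n \<tau> m. \<epsilon> k * (x k - ofs k)) / h"

definition kap :: "nat \<Rightarrow> (nat \<Rightarrow> real) \<Rightarrow> real \<Rightarrow> (nat \<Rightarrow> nat) \<Rightarrow> (nat \<Rightarrow> real) \<Rightarrow> nat \<Rightarrow> (nat \<Rightarrow> real) \<Rightarrow> nat \<Rightarrow> real" where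
  "kap n ofs h \<tau> \<epsilon> g x i = (if i = 0 then 1 - (\<Sum>j=1..n. (XX n ofs h \<tau> \<epsilon> x j - XX n ofs h \<tau> \<epsilon> x (Suc j)) / cc g j)
     else (XX n ofs h \<tau> \<epsilon> x i - XX n ofs h \<tau> \<epsilon> x (Suc i)) / cc g i)"

definition valid :: "nat \<Rightarrow> (nat \<Rightarrow> real) \<Rightarrow> real \<Rightarrow> (nat \<Rightarrow> nat) \<Rightarrow> (nat \<Rightarrow> real) \<Rightarrow> nat \<Rightarrow> bool" where
  "valid n ofs h \<tau> \<epsilon> g \<longleftrightarrow> 0 < h \<and> inj_on \<tau> {1..n} \<and> \<tau> ` {1..n} \<subseteq> {1..n} \<and> (\<forall>k. \<epsilon> k = 1 \<or> \<epsilon> k = -1) \<and> 1 \<le> g \<and> g \<le> n"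

definition phi :: "nat \<Rightarrow> nat \<Rightarrow> (nat \<Rightarrow> 'a::real_vector) \<Rightarrow> (nat \<Rightarrow> real) \<Rightarrow> 'a" where
  "phi n g0 v x = (\<Sum>i\<le>n. kap n (\<lambda>_. 0) 1 id (\<lambda>_. 1) g0 x i *\<^sub>R v i)"

lemma cc_pos: "0 < cc g j" by (simp add: cc_def)

lemma sum_atMost_split0: "(\<Sum>i\<le>(n::nat). f i) = f 0 + (\<Sum>i=1..n. f i)"
proof -
  have "{..n} = {0..n}" by (simp add: atLeast0AtMost)
  then show ?thesis by (simp add: sum.atLeast_Suc_atMost)
qed

lemma kap_sum: "(\<Sum>i\<le>n. kap n ofs h \<tau> \<epsilon> g x i) = 1"
  unfolding sum_atMost_split0 by (simp add: kap_def)

lemma XX_affine: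
  assumes J: "finite J" and a: "(\<Sum>j\<in>J. a j) = 1"
    and x: "\<And>k. k \<in> {1..n} \<Longrightarrow> x k = (\<Sum>j\<in>J. a j * p j k)"
  shows "XX n ofs h \<tau> \<epsilon> x m = (\<Sum>j\<in>J. a j * XX n ofs h \<tau> \<epsilon> (p j) m)"
proof -
  define S where "S j = (\<Sum>k\<in>fib n \<tau> m. \<epsilon> k * (p j k - ofs k))" for j
  have "(\<Sum>k\<in>fib n \<tau> m. \<epsilon> k * (x k - ofs k)) = (\<Sum>k\<in>fib n \<tau> m. (\<Sum>j\<in>J. a j * (\<epsilon> k * (p j k - ofs k))))"
  proof (rule sum.cong[OF refl])
    fix k assume "k \<in> fib n \<tau> m"
    then have "k \<in> {1..n}" by (simp add: fib_def)
    then have "x k - ofs k = (\<Sum>j\<in>J. a j * (p j k - ofs k))"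
      using x a by (simp add: algebra_simps sum_subtractf sum_distrib_right[symmetric])
    then show "\<epsilon> k * (x k - ofs k) = (\<Sum>j\<in>J. a j * (\<epsilon> k * (p j k - ofs k)))"
      by (simp add: sum_distrib_left algebra_simps)
  qed
  also have "\<dots> = (\<Sum>j\<in>J. a j * (\<Sum>k\<in>fib n \<tau> m. \<epsilon> k * (p j k - ofs k)))"
    by (subst sum.swap) (simp add: sum_distrib_left)
  finally have e: "(\<Sum>k\<in>fib n \<tau> m. \<epsilon> k * (x k - ofs k)) = (\<Sum>j\<in>J. a j * S j)"
    unfolding S_def .
  have "(\<Sum>j\<in>J. a j * S j) / h = (\<Sum>j\<in>J. a j * S j / h)" by (rule sum_divide_distrib)
  then show ?thesis unfolding XX_def e by (simp add: S_def)
qed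

lemma kap_affine:
  assumes J: "finite J" and a: "(\<Sum>j\<in>J. a j) = 1"
    and x: "\<And>k. k \<in> {1..n} \<Longrightarrow> x k = (\<Sum>j\<in>J. a j * p j k)"
  shows "kap n ofs h \<tau> \<epsilon> g x i = (\<Sum>j\<in>J. a j * kap n ofs h \<tau> \<epsilon> g (p j) i)"
proof -
  have X: "XX n ofs h \<tau> \<epsilon> x m = (\<Sum>j\<in>J. a j * XX n ofs h \<tau> \<epsilon> (p j) m)" for m
    by (rule XX_affine[OF J a x])
  have i1: "(XX n ofs h \<tau> \<epsilon> x i - XX n ofs h \<tau> \<epsilon> x (Suc i)) / cc g i
      = (\<Sum>j\<in>J. a j * ((XX n ofs h \<tau> \<epsilon> (p j) i - XX n ofs h \<tau> \<epsilon> (p j) (Suc i)) / cc g i))" for i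
    by (simp add: X right_diff_distrib sum_subtractf sum_divide_distrib diff_divide_distrib)
  show ?thesis
  proof (cases "i = 0")
    case True
    have "(\<Sum>j=1..n. (XX n ofs h \<tau> \<epsilon> x j - XX n ofs h \<tau> \<epsilon> x (Suc j)) / cc g j)
       = (\<Sum>j'\<in>J. a j' * (\<Sum>j=1..n. (XX n ofs h \<tau> \<epsilon> (p j') j - XX n ofs h \<tau> \<epsilon> (p j') (Suc j)) / cc g j))"
      unfolding i1 by (subst sum.swap) (simp add: sum_distrib_left)
    then show ?thesis using True a by (simp add: kap_def algebra_simps sum_subtractf sum_distrib_left)
  next
    case False
    then show ?thesis using i1 by (simp add: kap_def)
  qed
qed

lemma tele: "m \<le> Suc n \<Longrightarrow> (\<Sum>i=m..n. f i - f (Suc i)) = f m - (f (Suc n) :: real)"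
  by (induct n) (auto simp: le_Suc_eq)

lemma fib_empty: "\<tau> ` {1..n} \<subseteq> {1..n} \<Longrightarrow> fib n \<tau> (Suc n) = {}"
  unfolding fib_def by force

lemma fib_single: "inj_on \<tau> {1..n} \<Longrightarrow> k \<in> {1..n} \<Longrightarrow> fib n \<tau> (\<tau> k) = {k}"
  unfolding fib_def inj_on_def by blast

lemma XX_empty: "\<tau> ` {1..n} \<subseteq> {1..n} \<Longrightarrow> XX n ofs h \<tau> \<epsilon> x (Suc n) = 0"
  by (simp add: XX_def fib_empty)

lemma XX_single: "inj_on \<tau> {1..n} \<Longrightarrow> k \<in> {1..n} \<Longrightarrow> XX n ofs h \<tau> \<epsilon> x (\<tau> k) = \<epsilon> k * (x k - ofs k) / h"
  by (simp add: XX_def fib_single)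

lemma reconstruct:
  assumes v: "valid n ofs h \<tau> \<epsilon> g" and k: "k \<in> {1..n}"
  shows "(\<Sum>j\<le>n. kap n ofs h \<tau> \<epsilon> g x j * zv ofs h \<tau> \<epsilon> g j k) = x k"
proof -
  let ?K = "kap n ofs h \<tau> \<epsilon> g x"
  let ?X = "XX n ofs h \<tau> \<epsilon> x"
  have h: "0 < h" and inj: "inj_on \<tau> {1..n}" and into: "\<tau> ` {1..n} \<subseteq> {1..n}" and e: "\<epsilon> k = 1 \<or> \<epsilon> k = -1"
    using v by (auto simp: valid_def)
  have t: "\<tau> k \<in> {1..n}" using into k by blast
  have "(\<Sum>j\<le>n. ?K j * zv ofs h \<tau> \<epsilon> g j k) = (\<Sum>j\<le>n. ofs k * ?K j + h * \<epsilon> k * (if \<tau> k \<le> j then ?K j * cc g j else 0))"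
    by (rule sum.cong) (auto simp: zv_def algebra_simps)
  also have "\<dots> = ofs k * (\<Sum>j\<le>n. ?K j) + h * \<epsilon> k * (\<Sum>j\<le>n. if \<tau> k \<le> j then ?K j * cc g j else 0)"
    by (simp add: sum.distrib sum_distrib_left)
  also have "(\<Sum>j\<le>n. if \<tau> k \<le> j then ?K j * cc g j else 0) = (\<Sum>j\<in>{\<tau> k..n}. ?K j * cc g j)"
  proof -
    have "{j\<in>{..n}. \<tau> k \<le> j} = {\<tau> k..n}" by auto
    then show ?thesis by (simp add: sum.inter_filter[symmetric])
  qed
  also have "\<dots> = (\<Sum>j\<in>{\<tau> k..n}. ?X j - ?X (Suc j))"
  proof (rule sum.cong[OF refl])
    fix j assume "j \<in> {\<tau> k..n}"
    then have "j \<noteq> 0" using t by auto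
    then show "?K j * cc g j = ?X j - ?X (Suc j)" using cc_pos[of g j] by (simp add: kap_def)
  qed
  also have "\<dots> = ?X (\<tau> k) - ?X (Suc n)" using t by (intro tele) auto
  also have "\<dots> = \<epsilon> k * (x k - ofs k) / h" using XX_empty[OF into] XX_single[OF inj k] by simp
  finally show ?thesis using h e by (auto simp: kap_sum field_simps)
qed

lemma kap_ref:
  assumes "i \<le> n" "j \<le> n"
  shows "kap n (\<lambda>_. 0) 1 id (\<lambda>_. 1) g (zv (\<lambda>_. 0) 1 id (\<lambda>_. 1) g j) i = (if i = j then 1 else 0)"
proof -
  have X: "XX n (\<lambda>_. 0) 1 id (\<lambda>_. 1) (zv (\<lambda>_. 0) 1 id (\<lambda>_. 1) g j) m = (if 1 \<le> m \<and> m \<le> n \<and> m \<le> j then cc g j else 0)" for m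
  proof -
    have "fib n id m = (if 1 \<le> m \<and> m \<le> n then {m} else {})" by (auto simp: fib_def)
    then show ?thesis by (simp add: XX_def zv_def)
  qed
  have i1: "kap n (\<lambda>_. 0) 1 id (\<lambda>_. 1) g (zv (\<lambda>_. 0) 1 id (\<lambda>_. 1) g j) i = (if i = j then 1 else 0)" if "1 \<le> i" "i \<le> n" for i
    using that assms cc_pos[of g i] by (auto simp: kap_def X)
  show ?thesis
  proof (cases "i = 0")
    case False then show ?thesis using i1 assms by simp
  next
    case True
    have "(\<Sum>i\<le>n. kap n (\<lambda>_. 0) 1 id (\<lambda>_. 1) g (zv (\<lambda>_. 0) 1 id (\<lambda>_. 1) g j) i) = 1" by (rule kap_sum)
    moreover have "(\<Sum>i=1..n. kap n (\<lambda>_. 0) 1 id (\<lambda>_. 1) g (zv (\<lambda>_. 0) 1 id (\<lambda>_. 1) g j) i) = (\<Sum>i=1..n. (if i = j then 1 else 0))"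
      by (rule sum.cong) (auto simp: i1)
    ultimately have "kap n (\<lambda>_. 0) 1 id (\<lambda>_. 1) g (zv (\<lambda>_. 0) 1 id (\<lambda>_. 1) g j) 0 + (\<Sum>i=1..n. (if i = j then 1 else 0)) = 1"
      unfolding sum_atMost_split0 by simp
    then show ?thesis using True assms by (cases "j = 0") (auto split: if_splits)
  qed
qed

abbreviation "kap0 n g0 \<equiv> kap n (\<lambda>_. 0) 1 id (\<lambda>_. 1) g0"
abbreviation "zv0 g0 \<equiv> zv (\<lambda>_. 0) 1 id (\<lambda>_. 1) g0"

lemma XX_cong: "(\<And>k. k \<in> {1..n} \<Longrightarrow> x k = x' k) \<Longrightarrow> XX n ofs h \<tau> \<epsilon> x m = XX n ofs h \<tau> \<epsilon> x' m"
  unfolding XX_def by (intro arg_cong[where f="\<lambda>t. t / h"] sum.cong) (auto simp: fib_def)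

lemma kap_cong: "(\<And>k. k \<in> {1..n} \<Longrightarrow> x k = x' k) \<Longrightarrow> kap n ofs h \<tau> \<epsilon> g x i = kap n ofs h \<tau> \<epsilon> g x' i"
  unfolding kap_def using XX_cong[of n x x'] by simp

lemma phi_cong: "(\<And>k. k \<in> {1..n} \<Longrightarrow> x k = x' k) \<Longrightarrow> phi n g0 v x = phi n g0 v x'"
  unfolding phi_def using kap_cong[of n x x'] by simp

lemma phi_affine:
  assumes J: "finite J" and a: "(\<Sum>j\<in>J. a j) = 1"
    and x: "\<And>k. k \<in> {1..n} \<Longrightarrow> x k = (\<Sum>j\<in>J. a j * p j k)"
  shows "phi n g0 v x = (\<Sum>j\<in>J. a j *\<^sub>R phi n g0 v (p j))"
proof -
  have "phi n g0 v x = (\<Sum>i\<le>n. (\<Sum>j\<in>J. a j * kap0 n g0 (p j) i) *\<^sub>R v i)"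
    unfolding phi_def using kap_affine[OF J a x] by simp
  also have "\<dots> = (\<Sum>i\<le>n. \<Sum>j\<in>J. a j *\<^sub>R (kap0 n g0 (p j) i *\<^sub>R v i))"
    by (simp add: scaleR_sum_left)
  also have "\<dots> = (\<Sum>j\<in>J. a j *\<^sub>R phi n g0 v (p j))"
    unfolding phi_def by (subst sum.swap) (simp add: scaleR_sum_right)
  finally show ?thesis .
qed

lemma phi_mid:
  assumes "\<And>k. k \<in> {1..n} \<Longrightarrow> x k = (1/2) * p k + (1/2) * q k"
  shows "phi n g0 v x = (1/2) *\<^sub>R (phi n g0 v p + phi n g0 v q)"
proof -
  have "phi n g0 v x = (\<Sum>j\<in>{0::nat,1}. (1/2) *\<^sub>R phi n g0 v (if j = 0 then p else q))"
    by (rule phi_affine) (auto simp: assms)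
  then show ?thesis by (simp add: scaleR_right_distrib)
qed

lemma phi_ref: assumes "i \<le> n" shows "phi n g0 v (zv0 g0 i) = v i"
proof -
  have "phi n g0 v (zv0 g0 i) = (\<Sum>ia\<le>n. (if ia = i then v ia else 0))"
    unfolding phi_def by (rule sum.cong) (auto simp: kap_ref assms)
  then show ?thesis using assms by simp
qed

lemma right_coord:
  fixes t g n j :: nat and ofs h e :: real
  assumes t: "1 \<le> t" "t \<le> n" and g: "1 \<le> g" "g \<le> n" and e: "e = 1 \<or> e = -1"
  defines "t' \<equiv> (if t = 1 then g else if t \<le> g then t - 1 else t)"
    and "e' \<equiv> (if t = 1 then - e else e)"
    and "o' \<equiv> ofs + (if t = 1 then h * e else 0)"
    and "h' \<equiv> (if g = 1 then h/2 else h)"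
    and "g' \<equiv> new_tag n g"
  shows "j < g \<Longrightarrow> o' + h' * cc g' j * (if t' \<le> j then e' else 0) = ofs + h * cc g (Suc j) * (if t \<le> Suc j then e else 0)"
    and "o' + h' * cc g' g * (if t' \<le> g then e' else 0) = (1/2) * (ofs + h * cc g 0 * (if t \<le> 0 then e else 0)) + (1/2) * (ofs + h * cc g g * (if t \<le> g then e else 0))"
    and "g < j \<Longrightarrow> j \<le> n \<Longrightarrow> o' + h' * cc g' j * (if t' \<le> j then e' else 0) = ofs + h * cc g j * (if t \<le> j then e else 0)"
proof -
  assume j: "j < g"
  show "o' + h' * cc g' j * (if t' \<le> j then e' else 0) = ofs + h * cc g (Suc j) * (if t \<le> Suc j then e else 0)"
  proof (cases "t = 1")
    case True then show ?thesis using j g unfolding t'_def e'_def o'_def h'_def g'_def by (simp add: cc_def new_tag_def)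
  next
    case False
    then have "t \<ge> 2" using t by simp
    then show ?thesis using j g unfolding t'_def e'_def o'_def h'_def g'_def by (simp add: cc_def new_tag_def; arith)
  qed
next
  show "o' + h' * cc g' g * (if t' \<le> g then e' else 0) = (1/2) * (ofs + h * cc g 0 * (if t \<le> 0 then e else 0)) + (1/2) * (ofs + h * cc g g * (if t \<le> g then e else 0))"
  proof (cases "t = 1")
    case True then show ?thesis using g t unfolding t'_def e'_def o'_def h'_def g'_def by (cases "g = 1"; simp add: cc_def new_tag_def field_simps; arith?)
  next
    case False
    then have "t \<ge> 2" using t by simp
    then show ?thesis using g t unfolding t'_def e'_def o'_def h'_def g'_def by (cases "g = 1"; simp add: cc_def new_tag_def field_simps; arith?)
  qed
next
  assume j: "g < j" and jn: "j \<le> n"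
  show "o' + h' * cc g' j * (if t' \<le> j then e' else 0) = ofs + h * cc g j * (if t \<le> j then e else 0)"
  proof (cases "t = 1")
    case True then show ?thesis using g t j jn unfolding t'_def e'_def o'_def h'_def g'_def by (cases "g = 1"; simp add: cc_def new_tag_def field_simps; arith?)
  next
    case False
    then have "t \<ge> 2" using t by simp
    then show ?thesis using g t j jn unfolding t'_def e'_def o'_def h'_def g'_def by (cases "g = 1"; simp add: cc_def new_tag_def field_simps; arith?)
  qed
qed

lemma left_coord:
  fixes t g n j :: nat and ofs h e :: real
  assumes t: "1 \<le> t" "t \<le> n" and g: "1 \<le> g" "g \<le> n"
  defines "h' \<equiv> (if g = 1 then h/2 else h)"
    and "g' \<equiv> new_tag n g"
  shows "ofs + h' * cc g' g * (if t \<le> g then e else 0) = (1/2) * (ofs + h * cc g 0 * (if t \<le> 0 then e else 0)) + (1/2) * (ofs + h * cc g g * (if t \<le> g then e else 0))"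
    and "j \<noteq> g \<Longrightarrow> j \<le> n \<Longrightarrow> ofs + h' * cc g' j * (if t \<le> j then e else 0) = ofs + h * cc g j * (if t \<le> j then e else 0)"
proof -
  show "ofs + h' * cc g' g * (if t \<le> g then e else 0) = (1/2) * (ofs + h * cc g 0 * (if t \<le> 0 then e else 0)) + (1/2) * (ofs + h * cc g g * (if t \<le> g then e else 0))"
    using t g unfolding h'_def g'_def by (cases "g = 1"; simp add: cc_def new_tag_def field_simps; arith?)
next
  assume "j \<noteq> g" "j \<le> n"
  then show "ofs + h' * cc g' j * (if t \<le> j then e else 0) = ofs + h * cc g j * (if t \<le> j then e else 0)"
    using t g unfolding h'_def g'_def by (cases "g = 1"; simp add: cc_def new_tag_def field_simps; arith?)
qed

definition tau_r :: "nat \<Rightarrow> (nat \<Rightarrow> nat) \<Rightarrow> nat \<Rightarrow> nat" where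
  "tau_r g \<tau> k = (if \<tau> k = 1 then g else if \<tau> k \<le> g then \<tau> k - 1 else \<tau> k)"
definition eps_r :: "(nat \<Rightarrow> nat) \<Rightarrow> (nat \<Rightarrow> real) \<Rightarrow> nat \<Rightarrow> real" where
  "eps_r \<tau> \<epsilon> k = (if \<tau> k = 1 then - \<epsilon> k else \<epsilon> k)"
definition ofs_r :: "real \<Rightarrow> (nat \<Rightarrow> nat) \<Rightarrow> (nat \<Rightarrow> real) \<Rightarrow> (nat \<Rightarrow> real) \<Rightarrow> nat \<Rightarrow> real" where
  "ofs_r h \<tau> \<epsilon> ofs k = ofs k + (if \<tau> k = 1 then h * \<epsilon> k else 0)"

lemma valid_left:
  assumes "valid n ofs h \<tau> \<epsilon> g"
  shows "valid n ofs (if g = 1 then h/2 else h) \<tau> \<epsilon> (new_tag n g)"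
  using assms by (auto simp: valid_def new_tag_def)

lemma valid_right:
  assumes "valid n ofs h \<tau> \<epsilon> g"
  shows "valid n (ofs_r h \<tau> \<epsilon> ofs) (if g = 1 then h/2 else h) (tau_r g \<tau>) (eps_r \<tau> \<epsilon>) (new_tag n g)"
proof -
  have inj: "inj_on \<tau> {1..n}" and into: "\<tau> ` {1..n} \<subseteq> {1..n}" and g: "1 \<le> g" "g \<le> n"
    using assms by (auto simp: valid_def)
  have "inj_on (tau_r g \<tau>) {1..n}"
  proof (rule inj_onI)
    fix x y assume x: "x \<in> {1..n}" and y: "y \<in> {1..n}" and e: "tau_r g \<tau> x = tau_r g \<tau> y"
    have "\<tau> x \<in> {1..n}" "\<tau> y \<in> {1..n}" using x y into by blast+
    then have "\<tau> x = \<tau> y" using e g unfolding tau_r_def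
      by (cases "\<tau> x = 1"; cases "\<tau> y = 1"; cases "\<tau> x \<le> g"; cases "\<tau> y \<le> g"; simp)
    then show "x = y" using inj x y by (meson inj_onD)
  qed
  moreover have "tau_r g \<tau> ` {1..n} \<subseteq> {1..n}"
  proof
    fix y assume "y \<in> tau_r g \<tau> ` {1..n}"
    then obtain x where x: "x \<in> {1..n}" "y = tau_r g \<tau> x" by auto
    have "\<tau> x \<in> {1..n}" using x into by blast
    then show "y \<in> {1..n}" using x g unfolding tau_r_def by auto
  qed
  moreover have "\<forall>k. eps_r \<tau> \<epsilon> k = 1 \<or> eps_r \<tau> \<epsilon> k = -1" using assms by (auto simp: valid_def eps_r_def)
  moreover have "0 < (if g = 1 then h/2 else h)" using assms by (simp add: valid_def)
  moreover have "1 \<le> new_tag n g" "new_tag n g \<le> n" using g by (auto simp: new_tag_def)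
  ultimately show ?thesis unfolding valid_def by blast
qed

lemma desc_frame:
  assumes n: "1 \<le> n" and g0: "snd T0 \<in> {1..n}" and T: "T \<in> maubach_desc n T0"
  shows "\<exists>ofs h \<tau> \<epsilon>. valid n ofs h \<tau> \<epsilon> (snd T) \<and>
            (\<forall>j\<le>n. fst T j = phi n (snd T0) (fst T0) (zv ofs h \<tau> \<epsilon> (snd T) j))"
  using T
proof induction
  case base
  have "valid n (\<lambda>_. 0) 1 id (\<lambda>_. 1) (snd T0)" using g0 by (auto simp: valid_def)
  then show ?case using phi_ref[of _ n "snd T0" "fst T0"] by metis
next
  case (left T)
  then obtain ofs h \<tau> \<epsilon> where v: "valid n ofs h \<tau> \<epsilon> (snd T)"
    and f: "\<forall>j\<le>n. fst T j = phi n (snd T0) (fst T0) (zv ofs h \<tau> \<epsilon> (snd T) j)" by blast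
  define g where "g = snd T"
  define h' where "h' = (if g = 1 then h/2 else h)"
  have v': "valid n ofs h' \<tau> \<epsilon> (new_tag n g)" using valid_left[OF v] by (simp add: g_def h'_def)
  have tk: "\<tau> k \<in> {1..n}" if "k \<in> {1..n}" for k using v that unfolding valid_def by blast
  have gg: "1 \<le> g" "g \<le> n" using v by (auto simp: valid_def g_def)
  have co_mid: "zv ofs h' \<tau> \<epsilon> (new_tag n g) g k = (1/2) * zv ofs h \<tau> \<epsilon> g 0 k + (1/2) * zv ofs h \<tau> \<epsilon> g g k"
    if "k \<in> {1..n}" for k
    unfolding zv_def h'_def by (rule left_coord(1)) (use tk[OF that] gg in auto)
  have co_other: "zv ofs h' \<tau> \<epsilon> (new_tag n g) j k = zv ofs h \<tau> \<epsilon> g j k"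
    if "k \<in> {1..n}" "j \<noteq> g" "j \<le> n" for j k
    unfolding zv_def h'_def by (rule left_coord(2)) (use tk[OF that(1)] gg that(2,3) in auto)
  have "\<forall>j\<le>n. fst (bisect_left n T) j = phi n (snd T0) (fst T0) (zv ofs h' \<tau> \<epsilon> (snd (bisect_left n T)) j)"
  proof (intro allI impI)
    fix j assume j: "j \<le> n"
    show "fst (bisect_left n T) j = phi n (snd T0) (fst T0) (zv ofs h' \<tau> \<epsilon> (snd (bisect_left n T)) j)"
    proof (cases "j = g")
      case True
      have "phi n (snd T0) (fst T0) (zv ofs h' \<tau> \<epsilon> (new_tag n g) g)
          = (1/2) *\<^sub>R (phi n (snd T0) (fst T0) (zv ofs h \<tau> \<epsilon> g 0) + phi n (snd T0) (fst T0) (zv ofs h \<tau> \<epsilon> g g))"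
        by (rule phi_mid) (rule co_mid)
      then show ?thesis using True f gg by (simp add: bisect_left_def Let_def g_def)
    next
      case False
      have "phi n (snd T0) (fst T0) (zv ofs h' \<tau> \<epsilon> (new_tag n g) j) = phi n (snd T0) (fst T0) (zv ofs h \<tau> \<epsilon> g j)"
        by (rule phi_cong) (rule co_other[OF _ False j])
      then show ?thesis using False f j by (simp add: bisect_left_def Let_def g_def)
    qed
  qed
  moreover have "snd (bisect_left n T) = new_tag n g" by (simp add: bisect_left_def Let_def g_def)
  ultimately show ?case using v' by metis
next
  case (right T)
  then obtain ofs h \<tau> \<epsilon> where v: "valid n ofs h \<tau> \<epsilon> (snd T)"
    and f: "\<forall>j\<le>n. fst T j = phi n (snd T0) (fst T0) (zv ofs h \<tau> \<epsilon> (snd T) j)" by blast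
  define g where "g = snd T"
  define h' where "h' = (if g = 1 then h/2 else h)"
  define ofs' where "ofs' = ofs_r h \<tau> \<epsilon> ofs"
  define \<tau>' where "\<tau>' = tau_r g \<tau>"
  define \<epsilon>' where "\<epsilon>' = eps_r \<tau> \<epsilon>"
  have v': "valid n ofs' h' \<tau>' \<epsilon>' (new_tag n g)" using valid_right[OF v] by (simp add: g_def h'_def ofs'_def \<tau>'_def \<epsilon>'_def)
  have tk: "\<tau> k \<in> {1..n}" if "k \<in> {1..n}" for k using v that unfolding valid_def by blast
  have ek: "\<epsilon> k = 1 \<or> \<epsilon> k = -1" for k using v by (auto simp: valid_def)
  have gg: "1 \<le> g" "g \<le> n" using v by (auto simp: valid_def g_def)
  have co_lt: "zv ofs' h' \<tau>' \<epsilon>' (new_tag n g) j k = zv ofs h \<tau> \<epsilon> g (Suc j) k"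
    if "k \<in> {1..n}" "j < g" for j k
    unfolding zv_def h'_def ofs'_def \<tau>'_def \<epsilon>'_def ofs_r_def tau_r_def eps_r_def
    by (rule right_coord(1)) (use tk[OF that(1)] gg that(2) ek[of k] in auto)
  have co_mid: "zv ofs' h' \<tau>' \<epsilon>' (new_tag n g) g k = (1/2) * zv ofs h \<tau> \<epsilon> g 0 k + (1/2) * zv ofs h \<tau> \<epsilon> g g k"
    if "k \<in> {1..n}" for k
    unfolding zv_def h'_def ofs'_def \<tau>'_def \<epsilon>'_def ofs_r_def tau_r_def eps_r_def
    by (rule right_coord(2)) (use tk[OF that(1)] gg ek[of k] in auto)
  have co_gt: "zv ofs' h' \<tau>' \<epsilon>' (new_tag n g) j k = zv ofs h \<tau> \<epsilon> g j k"
    if "k \<in> {1..n}" "g < j" "j \<le> n" for j k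
    unfolding zv_def h'_def ofs'_def \<tau>'_def \<epsilon>'_def ofs_r_def tau_r_def eps_r_def
    by (rule right_coord(3)) (use tk[OF that(1)] gg that(2,3) ek[of k] in auto)
  have "\<forall>j\<le>n. fst (bisect_right n T) j = phi n (snd T0) (fst T0) (zv ofs' h' \<tau>' \<epsilon>' (snd (bisect_right n T)) j)"
  proof (intro allI impI)
    fix j assume j: "j \<le> n"
    consider "j < g" | "j = g" | "g < j" by linarith
    then show "fst (bisect_right n T) j = phi n (snd T0) (fst T0) (zv ofs' h' \<tau>' \<epsilon>' (snd (bisect_right n T)) j)"
    proof cases
      case 1
      have "phi n (snd T0) (fst T0) (zv ofs' h' \<tau>' \<epsilon>' (new_tag n g) j) = phi n (snd T0) (fst T0) (zv ofs h \<tau> \<epsilon> g (Suc j))"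
        by (rule phi_cong) (rule co_lt[OF _ 1])
      then show ?thesis using 1 f gg by (simp add: bisect_right_def Let_def g_def)
    next
      case 2
      have "phi n (snd T0) (fst T0) (zv ofs' h' \<tau>' \<epsilon>' (new_tag n g) g)
          = (1/2) *\<^sub>R (phi n (snd T0) (fst T0) (zv ofs h \<tau> \<epsilon> g 0) + phi n (snd T0) (fst T0) (zv ofs h \<tau> \<epsilon> g g))"
        by (rule phi_mid) (rule co_mid)
      then show ?thesis using 2 f gg by (simp add: bisect_right_def Let_def g_def)
    next
      case 3
      have "phi n (snd T0) (fst T0) (zv ofs' h' \<tau>' \<epsilon>' (new_tag n g) j) = phi n (snd T0) (fst T0) (zv ofs h \<tau> \<epsilon> g j)"
        by (rule phi_cong) (rule co_gt[OF _ 3 j])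
      then show ?thesis using 3 f j by (simp add: bisect_right_def Let_def g_def)
    qed
  qed
  moreover have "snd (bisect_right n T) = new_tag n g" by (simp add: bisect_right_def Let_def g_def)
  ultimately show ?case using v' by metis
qed

lemma cc_anti: "a \<le> b \<Longrightarrow> cc g b \<le> cc g a"
  by (simp add: cc_def)

lemma XX_zv:
  assumes hG: "hG \<noteq> 0"
  shows "XX n oG hG \<tau>G \<epsilon>G (zv oF hF \<tau>F \<epsilon>F gF j) m
     = XX n oG hG \<tau>G \<epsilon>G oF m + (hF / hG) * (\<Sum>k\<in>fib n \<tau>G m. \<epsilon>G k * \<epsilon>F k * (if \<tau>F k \<le> j then cc gF j else 0))"
proof -
  have "(\<Sum>k\<in>fib n \<tau>G m. \<epsilon>G k * (zv oF hF \<tau>F \<epsilon>F gF j k - oG k))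
      = (\<Sum>k\<in>fib n \<tau>G m. \<epsilon>G k * (oF k - oG k)) + hF * (\<Sum>k\<in>fib n \<tau>G m. \<epsilon>G k * \<epsilon>F k * (if \<tau>F k \<le> j then cc gF j else 0))"
  proof -
    have "(\<Sum>k\<in>fib n \<tau>G m. \<epsilon>G k * (zv oF hF \<tau>F \<epsilon>F gF j k - oG k))
      = (\<Sum>k\<in>fib n \<tau>G m. \<epsilon>G k * (oF k - oG k) + hF * (\<epsilon>G k * \<epsilon>F k * (if \<tau>F k \<le> j then cc gF j else 0)))"
      by (rule sum.cong) (auto simp: zv_def algebra_simps)
    then show ?thesis by (simp add: sum.distrib sum_distrib_left)
  qed
  then show ?thesis using hG by (simp add: XX_def add_divide_distrib)
qed

lemma U_bounds:
  assumes eG: "\<forall>k. \<epsilon>G k = 1 \<or> \<epsilon>G k = -1" and eF: "\<forall>k. \<epsilon>F k = 1 \<or> \<epsilon>F k = -1"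
  shows "- (\<Sum>k\<in>A. if \<epsilon>G k * \<epsilon>F k < 0 then cc gF (\<tau>F k) else 0)
           \<le> (\<Sum>k\<in>A. \<epsilon>G k * \<epsilon>F k * (if \<tau>F k \<le> j then cc gF j else 0))"
    and "(\<Sum>k\<in>A. \<epsilon>G k * \<epsilon>F k * (if \<tau>F k \<le> j then cc gF j else 0))
           \<le> (\<Sum>k\<in>A. if \<epsilon>G k * \<epsilon>F k > 0 then cc gF (\<tau>F k) else 0)"
proof -
  have t: "0 \<le> (if \<tau>F k \<le> j then cc gF j else 0) \<and> (if \<tau>F k \<le> j then cc gF j else 0) \<le> cc gF (\<tau>F k)" for k
    using cc_anti[of "\<tau>F k" j gF] cc_pos[of gF j] cc_pos[of gF "\<tau>F k"] by auto
  have e: "\<epsilon>G k * \<epsilon>F k = 1 \<or> \<epsilon>G k * \<epsilon>F k = -1" for k using eG eF by (metis mult_minus_left mult_1_left mult_1_right mult_minus_right minus_minus)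
  show "- (\<Sum>k\<in>A. if \<epsilon>G k * \<epsilon>F k < 0 then cc gF (\<tau>F k) else 0)
           \<le> (\<Sum>k\<in>A. \<epsilon>G k * \<epsilon>F k * (if \<tau>F k \<le> j then cc gF j else 0))"
    unfolding sum_negf[symmetric]
  proof (rule sum_mono)
    fix k show "- (if \<epsilon>G k * \<epsilon>F k < 0 then cc gF (\<tau>F k) else 0) \<le> \<epsilon>G k * \<epsilon>F k * (if \<tau>F k \<le> j then cc gF j else 0)"
      using e[of k] t[of k] by (elim disjE) (simp_all del: mult_minus_left)
  qed
  show "(\<Sum>k\<in>A. \<epsilon>G k * \<epsilon>F k * (if \<tau>F k \<le> j then cc gF j else 0))
           \<le> (\<Sum>k\<in>A. if \<epsilon>G k * \<epsilon>F k > 0 then cc gF (\<tau>F k) else 0)"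
  proof (rule sum_mono)
    fix k show "\<epsilon>G k * \<epsilon>F k * (if \<tau>F k \<le> j then cc gF j else 0) \<le> (if \<epsilon>G k * \<epsilon>F k > 0 then cc gF (\<tau>F k) else 0)"
      using e[of k] t[of k] by (elim disjE) (simp_all del: mult_minus_left)
  qed
qed

lemma shift_sum_le:
  fixes b c :: "nat \<Rightarrow> real"
  assumes b: "\<And>i. 0 \<le> b i" and bn: "b (Suc n) = 0" and c: "\<And>i. 0 < c i" and anti: "\<And>i. c (Suc i) \<le> c i"
  shows "(\<Sum>i=1..n. b (Suc i) / c i) \<le> (\<Sum>i=1..n. b i / c i)"
proof -
  have "(\<Sum>i=1..n. b (Suc i) / c i) \<le> (\<Sum>i=1..n. b (Suc i) / c (Suc i))"
    by (rule sum_mono) (simp add: b c anti frac_le)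
  also have "\<dots> = (\<Sum>i=Suc 1..Suc n. b i / c i)" by (rule sum.shift_bounds_cl_Suc_ivl[symmetric])
  also have "\<dots> \<le> (\<Sum>i=1..Suc n. b i / c i)"
    by (rule sum_mono2) (auto intro!: divide_nonneg_pos b c)
  also have "\<dots> = (\<Sum>i=1..n. b i / c i)" using bn by simp
  finally show ?thesis .
qed

lemma kap0_eq: "kap n ofs h \<tau> \<epsilon> g x 0 = 1 - (\<Sum>i=1..n. kap n ofs h \<tau> \<epsilon> g x i)"
proof -
  have "(\<Sum>i=1..n. kap n ofs h \<tau> \<epsilon> g x i) = (\<Sum>j=1..n. (XX n ofs h \<tau> \<epsilon> x j - XX n ofs h \<tau> \<epsilon> x (Suc j)) / cc g j)"
    by (rule sum.cong) (auto simp: kap_def)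
  then show ?thesis by (simp add: kap_def)
qed

lemma frame_bound:
  assumes vG: "valid n oG hG \<tau>G \<epsilon>G gG" and vF: "valid n oF hF \<tau>F \<epsilon>F gF"
  shows "\<exists>mm. (\<forall>j\<le>n. \<forall>i\<le>n. mm i \<le> kap n oG hG \<tau>G \<epsilon>G gG (zv oF hF \<tau>F \<epsilon>F gF j) i)
     \<and> (\<Sum>i\<le>n. mm i) = 1 - (hF / hG) * (\<Sum>k=1..n. cc gF (\<tau>F k) / cc gG (\<tau>G k))"
proof -
  have hG: "0 < hG" and hF: "0 < hF" and into: "\<tau>G ` {1..n} \<subseteq> {1..n}"
    and eG: "\<forall>k. \<epsilon>G k = 1 \<or> \<epsilon>G k = -1" and eF: "\<forall>k. \<epsilon>F k = 1 \<or> \<epsilon>F k = -1"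
    using vG vF by (auto simp: valid_def)
  define \<rho> where "\<rho> = hF / hG"
  have \<rho>: "0 \<le> \<rho>" using hG hF by (simp add: \<rho>_def)
  define w where "w k = cc gF (\<tau>F k)" for k
  define Nn where "Nn i = (\<Sum>k\<in>fib n \<tau>G i. if \<epsilon>G k * \<epsilon>F k < 0 then cc gF (\<tau>F k) else 0)" for i
  define Pp where "Pp i = (\<Sum>k\<in>fib n \<tau>G i. if \<epsilon>G k * \<epsilon>F k > 0 then cc gF (\<tau>F k) else 0)" for i
  define U where "U j i = (\<Sum>k\<in>fib n \<tau>G i. \<epsilon>G k * \<epsilon>F k * (if \<tau>F k \<le> j then cc gF j else 0))" for j i
  define S where "S = (\<Sum>k=1..n. cc gF (\<tau>F k) / cc gG (\<tau>G k))"
  define K where "K x i = kap n oG hG \<tau>G \<epsilon>G gG x i" for x i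
  define mm' where "mm' i = K oF i + \<rho> * (- (Nn i + Pp (Suc i))) / cc gG i" for i
  define mm where "mm i = (if i = 0 then 1 - (\<Sum>i'=1..n. mm' i') - \<rho> * S else mm' i)" for i
  have Ub1: "- Nn i \<le> U j i" for i j
    unfolding Nn_def Pp_def U_def by (rule U_bounds(1)[OF eG eF])
  have Ub2: "U j i \<le> Pp i" for i j
    unfolding Nn_def Pp_def U_def by (rule U_bounds(2)[OF eG eF])
  note Ub = Ub1 Ub2
  have fe: "fib n \<tau>G (Suc n) = {}" by (rule fib_empty[OF into])
  have z1: "Nn (Suc n) = 0" "Pp (Suc n) = 0" "U j (Suc n) = 0" for j
    unfolding Nn_def Pp_def U_def fe by simp_all
  have Kz: "K (zv oF hF \<tau>F \<epsilon>F gF j) i = K oF i + \<rho> * (U j i - U j (Suc i)) / cc gG i" if "i \<noteq> 0" for i j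
  proof -
    have hG0: "hG \<noteq> 0" using hG by simp
    have Xz: "XX n oG hG \<tau>G \<epsilon>G (zv oF hF \<tau>F \<epsilon>F gF j) m = XX n oG hG \<tau>G \<epsilon>G oF m + \<rho> * U j m" for m
      unfolding U_def \<rho>_def by (rule XX_zv[OF hG0])
    have kp: "K x i = (XX n oG hG \<tau>G \<epsilon>G x i - XX n oG hG \<tau>G \<epsilon>G x (Suc i)) / cc gG i" for x
      unfolding K_def kap_def using that by simp
    have "K (zv oF hF \<tau>F \<epsilon>F gF j) i = ((XX n oG hG \<tau>G \<epsilon>G oF i + \<rho> * U j i) - (XX n oG hG \<tau>G \<epsilon>G oF (Suc i) + \<rho> * U j (Suc i))) / cc gG i"
      unfolding kp Xz ..
    also have "\<dots> = (XX n oG hG \<tau>G \<epsilon>G oF i - XX n oG hG \<tau>G \<epsilon>G oF (Suc i)) / cc gG i + \<rho> * (U j i - U j (Suc i)) / cc gG i"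
      by (simp add: diff_divide_distrib add_divide_distrib right_diff_distrib)
    also have "\<dots> = K oF i + \<rho> * (U j i - U j (Suc i)) / cc gG i" unfolding kp ..
    finally show ?thesis .
  qed
  have low: "mm' i \<le> K (zv oF hF \<tau>F \<epsilon>F gF j) i" if "i \<noteq> 0" for i j
  proof -
    have d: "- (Nn i + Pp (Suc i)) \<le> U j i - U j (Suc i)" using Ub[where i=i and j=j] Ub[where i="Suc i" and j=j] by linarith
    have "\<rho> * (- (Nn i + Pp (Suc i))) / cc gG i \<le> \<rho> * (U j i - U j (Suc i)) / cc gG i"
      by (rule divide_right_mono[OF mult_left_mono[OF d \<rho>]]) (rule less_imp_le[OF cc_pos])
    then show ?thesis unfolding Kz[OF that] mm'_def by linarith
  qed
  have S_eq: "S = (\<Sum>i=1..n. (Nn i + Pp i) / cc gG i)"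
  proof -
    have "S = (\<Sum>i\<in>{1..n}. \<Sum>k\<in>{x. x \<in> {1..n} \<and> \<tau>G x = i}. cc gF (\<tau>F k) / cc gG (\<tau>G k))"
      unfolding S_def by (rule sum.group[symmetric]) (use into in auto)
    also have "\<dots> = (\<Sum>i=1..n. (Nn i + Pp i) / cc gG i)"
    proof (rule sum.cong[OF refl])
      fix i assume "i \<in> {1..n}"
      have "(\<Sum>k\<in>{x. x \<in> {1..n} \<and> \<tau>G x = i}. cc gF (\<tau>F k) / cc gG (\<tau>G k))
          = (\<Sum>k\<in>fib n \<tau>G i. ((if \<epsilon>G k * \<epsilon>F k < 0 then cc gF (\<tau>F k) else 0) + (if \<epsilon>G k * \<epsilon>F k > 0 then cc gF (\<tau>F k) else 0)) / cc gG i)"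
      proof (rule sum.cong)
        show "{x. x \<in> {1..n} \<and> \<tau>G x = i} = fib n \<tau>G i" by (auto simp: fib_def)
      next
        fix k assume "k \<in> fib n \<tau>G i"
        then have "\<tau>G k = i" by (simp add: fib_def)
        moreover have "\<epsilon>G k * \<epsilon>F k = 1 \<or> \<epsilon>G k * \<epsilon>F k = -1" using eG eF
          by (metis mult_minus_left mult_1_left mult_1_right mult_minus_right minus_minus)
        ultimately show "cc gF (\<tau>F k) / cc gG (\<tau>G k) = ((if \<epsilon>G k * \<epsilon>F k < 0 then cc gF (\<tau>F k) else 0) + (if \<epsilon>G k * \<epsilon>F k > 0 then cc gF (\<tau>F k) else 0)) / cc gG i"
          by auto
      qed
      also have "\<dots> = (Nn i + Pp i) / cc gG i"
        unfolding Nn_def Pp_def by (simp add: sum_divide_distrib[symmetric] sum.distrib)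
      finally show "(\<Sum>k\<in>{x. x \<in> {1..n} \<and> \<tau>G x = i}. cc gF (\<tau>F k) / cc gG (\<tau>G k)) = (Nn i + Pp i) / cc gG i" .
    qed
    finally show ?thesis .
  qed
  have main0: "(\<Sum>i=1..n. K (zv oF hF \<tau>F \<epsilon>F gF j) i - mm' i) \<le> \<rho> * S" for j
  proof -
    define a where "a i = U j i + Nn i" for i
    define b where "b i = Pp i - U j i" for i
    have b0: "0 \<le> b i" for i using Ub[where i=i and j=j] by (simp add: b_def)
    have bn: "b (Suc n) = 0" using z1 by (simp add: b_def)
    have "(\<Sum>i=1..n. K (zv oF hF \<tau>F \<epsilon>F gF j) i - mm' i) = (\<Sum>i=1..n. \<rho> * (a i / cc gG i + b (Suc i) / cc gG i))"
    proof (rule sum.cong[OF refl])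
      fix i assume "i \<in> {1..n}"
      then have "i \<noteq> 0" by simp
      then show "K (zv oF hF \<tau>F \<epsilon>F gF j) i - mm' i = \<rho> * (a i / cc gG i + b (Suc i) / cc gG i)"
        unfolding Kz[OF \<open>i \<noteq> 0\<close>] mm'_def a_def b_def using cc_pos[of gG i] by (simp add: field_simps)
    qed
    also have "\<dots> = \<rho> * ((\<Sum>i=1..n. a i / cc gG i) + (\<Sum>i=1..n. b (Suc i) / cc gG i))"
      by (simp only: sum_distrib_left[symmetric] sum.distrib[symmetric])
    also have "\<dots> \<le> \<rho> * ((\<Sum>i=1..n. a i / cc gG i) + (\<Sum>i=1..n. b i / cc gG i))"
      using shift_sum_le[of b n "cc gG", OF b0 bn cc_pos cc_anti] \<rho> by (intro mult_left_mono) auto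
    also have "\<dots> = \<rho> * S" unfolding S_eq
      by (simp add: sum.distrib[symmetric] add_divide_distrib[symmetric] a_def b_def)
    finally show ?thesis .
  qed
  have "\<forall>j\<le>n. \<forall>i\<le>n. mm i \<le> K (zv oF hF \<tau>F \<epsilon>F gF j) i"
  proof (intro allI impI)
    fix j i assume "j \<le> n" "i \<le> n"
    show "mm i \<le> K (zv oF hF \<tau>F \<epsilon>F gF j) i"
    proof (cases "i = 0")
      case False then show ?thesis using low by (simp add: mm_def)
    next
      case True
      have "K (zv oF hF \<tau>F \<epsilon>F gF j) 0 = 1 - (\<Sum>i=1..n. K (zv oF hF \<tau>F \<epsilon>F gF j) i)"
        unfolding K_def by (rule kap0_eq)
      then show ?thesis using True main0[of j] by (simp add: mm_def sum_subtractf)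
    qed
  qed
  moreover have "(\<Sum>i\<le>n. mm i) = 1 - \<rho> * S"
    unfolding sum_atMost_split0 by (simp add: mm_def)
  ultimately show ?thesis unfolding K_def \<rho>_def S_def by blast
qed

lemma hull_homothety:
  fixes P Q :: "nat \<Rightarrow> 'a::euclidean_space"
  assumes Q: "\<forall>j\<le>n. \<exists>a. (\<forall>i\<le>n. mm i \<le> a i) \<and> (\<Sum>i\<le>n. a i) = 1 \<and> Q j = (\<Sum>i\<le>n. a i *\<^sub>R P i)"
    and m: "(\<Sum>i\<le>n. mm i) = 1 - s" and s: "0 < s"
  shows "simplex_set n Q \<subseteq> (\<lambda>x. (\<Sum>i\<le>n. mm i *\<^sub>R P i) + s *\<^sub>R x) ` simplex_set n P"
  unfolding simplex_set_def
proof (rule hull_minimal)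
  show "convex ((\<lambda>x. (\<Sum>i\<le>n. mm i *\<^sub>R P i) + s *\<^sub>R x) ` (convex hull (P ` {..n})))"
    by (rule convex_affinity) (rule convex_convex_hull)
  show "Q ` {..n} \<subseteq> (\<lambda>x. (\<Sum>i\<le>n. mm i *\<^sub>R P i) + s *\<^sub>R x) ` (convex hull (P ` {..n}))"
  proof
    fix z assume "z \<in> Q ` {..n}"
    then obtain j where j: "j \<le> n" "z = Q j" by auto
    obtain a where a: "\<forall>i\<le>n. mm i \<le> a i" "(\<Sum>i\<le>n. a i) = 1" "Q j = (\<Sum>i\<le>n. a i *\<^sub>R P i)"
      using Q j by blast
    define c where "c i = (a i - mm i) / s" for i
    have c0: "0 \<le> c i" if "i \<in> {..n}" for i using a(1) that s by (simp add: c_def)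
    have c1: "(\<Sum>i\<in>{..n}. c i) = 1"
      using a(2) m s by (simp add: c_def sum_divide_distrib[symmetric] sum_subtractf)
    have y: "(\<Sum>i\<in>{..n}. c i *\<^sub>R P i) \<in> convex hull P ` {..n}"
      by (rule convex_sum[OF _ convex_convex_hull c1 c0]) (auto intro: hull_inc)
    have "(\<Sum>i\<le>n. mm i *\<^sub>R P i) + s *\<^sub>R (\<Sum>i\<in>{..n}. c i *\<^sub>R P i) = (\<Sum>i\<le>n. mm i *\<^sub>R P i) + (\<Sum>i\<le>n. (a i - mm i) *\<^sub>R P i)"
      using s by (simp add: scaleR_sum_right c_def)
    also have "\<dots> = Q j" using a(3) by (simp add: scaleR_diff_left sum_subtractf)
    finally show "z \<in> (\<lambda>x. (\<Sum>i\<le>n. mm i *\<^sub>R P i) + s *\<^sub>R x) ` (convex hull (P ` {..n}))"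
      using y j by (metis (no_types, lifting) image_eqI)
  qed
qed

lemma outer_diam_nonneg:
  fixes S :: "'a::euclidean_space set"
  assumes "bounded S" "S \<noteq> {}"
  shows "0 \<le> outer_diam S"
  unfolding outer_diam_def
proof (rule cInf_greatest)
  obtain c r where "S \<subseteq> cball c r" using assms(1) bounded_subset_cball by blast
  then show "{2 * r |c r. S \<subseteq> cball c r} \<noteq> {}" by blast
next
  fix x assume "x \<in> {2 * r |c r. S \<subseteq> cball c r}"
  then obtain c r where "x = 2 * r" "S \<subseteq> cball c r" by blast
  moreover obtain y where "y \<in> S" using assms(2) by blast
  ultimately have "dist c y \<le> r" "x = 2 * r" by auto
  then show "0 \<le> x" using zero_le_dist[of c y] by linarith
qed

lemma outer_scale:
  fixes S S' :: "'a::euclidean_space set"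
  assumes sub: "S \<subseteq> (\<lambda>x. q + s *\<^sub>R x) ` S'" and s: "0 < s" and b: "bounded S'" and ne: "S \<noteq> {}"
  shows "outer_diam S \<le> s * outer_diam S'"
proof -
  let ?A = "{2 * r |c r. S \<subseteq> cball c r}"
  let ?A' = "{2 * r |c r. S' \<subseteq> cball c r}"
  have bddA: "bdd_below ?A"
  proof -
    obtain y where y: "y \<in> S" using ne by blast
    have "0 \<le> x" if "x \<in> ?A" for x
    proof -
      from that obtain c r where "x = 2 * r" "S \<subseteq> cball c r" by blast
      then have "dist c y \<le> r" "x = 2 * r" using y by auto
      then show ?thesis using zero_le_dist[of c y] by linarith
    qed
    then show ?thesis by (auto simp: bdd_below_def)
  qed
  have neA': "?A' \<noteq> {}" using b bounded_subset_cball by blast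
  have "Inf ?A / s \<le> Inf ?A'"
  proof (rule cInf_greatest[OF neA'])
    fix x assume "x \<in> ?A'"
    then obtain c r where x: "x = 2 * r" and c: "S' \<subseteq> cball c r" by blast
    have "S \<subseteq> cball (q + s *\<^sub>R c) (s * r)"
    proof
      fix y assume "y \<in> S"
      then obtain z where z: "z \<in> S'" "y = q + s *\<^sub>R z" using sub by blast
      have "dist (q + s *\<^sub>R c) y = s * dist c z"
        using s z(2) by (simp add: dist_norm scaleR_diff_right[symmetric])
      also have "\<dots> \<le> s * r" using c z(1) s by (auto simp: subset_eq)
      finally show "y \<in> cball (q + s *\<^sub>R c) (s * r)" by simp
    qed
    then have "2 * (s * r) \<in> ?A" by blast
    then have "Inf ?A \<le> 2 * (s * r)" using bddA by (rule cInf_lower)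
    then show "Inf ?A / s \<le> x" using s x by (simp add: field_simps)
  qed
  then show ?thesis unfolding outer_diam_def using s by (simp add: field_simps)
qed

lemma cball_in_bounded:
  fixes S :: "'a::euclidean_space set"
  assumes "bounded S"
  obtains M where "\<And>c r. 0 \<le> r \<Longrightarrow> cball c r \<subseteq> S \<Longrightarrow> 2 * r \<le> M"
proof -
  obtain M where M: "\<And>x. x \<in> S \<Longrightarrow> norm x \<le> M" using assms bounded_iff by blast
  obtain e :: 'a where e: "e \<in> Basis" using nonempty_Basis by blast
  have "2 * r \<le> 2 * M" if "0 \<le> r" "cball c r \<subseteq> S" for c r
  proof -
    have "c + r *\<^sub>R e \<in> S" "c - r *\<^sub>R e \<in> S" using that e by (auto simp: subset_eq dist_norm)
    then have n1: "norm (c + r *\<^sub>R e) \<le> M" "norm (c - r *\<^sub>R e) \<le> M" using M by auto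
    have "2 * r = norm ((c + r *\<^sub>R e) - (c - r *\<^sub>R e))" using that e by (simp add: scaleR_2[symmetric])
    also have "\<dots> \<le> norm (c + r *\<^sub>R e) + norm (c - r *\<^sub>R e)" by (rule norm_triangle_ineq4)
    finally show ?thesis using n1 by linarith
  qed
  then show ?thesis using that by blast
qed

lemma inner_scale:
  fixes S S' :: "'a::euclidean_space set"
  assumes sub: "S' \<subseteq> (\<lambda>x. q + t *\<^sub>R x) ` S" and t: "0 < t" and b: "bounded S" and ne: "S' \<noteq> {}"
  shows "inner_diam S' \<le> t * inner_diam S"
proof -
  let ?B = "{2 * r |c r. 0 \<le> r \<and> cball c r \<subseteq> S}"
  let ?B' = "{2 * r |c r. 0 \<le> r \<and> cball c r \<subseteq> S'}"
  obtain M where M: "\<And>c r. 0 \<le> r \<Longrightarrow> cball c r \<subseteq> S \<Longrightarrow> 2 * r \<le> M" using cball_in_bounded[OF b] by blast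
  have bddB: "bdd_above ?B" unfolding bdd_above_def using M by blast
  obtain y where y: "y \<in> S'" using ne by blast
  have neB': "?B' \<noteq> {}"
  proof -
    have "cball y 0 \<subseteq> S'" using y by simp
    then have "2 * 0 \<in> ?B'" by blast
    then show ?thesis by blast
  qed
  have "Sup ?B' \<le> t * Sup ?B"
  proof (rule cSup_least[OF neB'])
    fix x assume "x \<in> ?B'"
    then obtain c r where x: "x = 2 * r" and r: "0 \<le> r" and c: "cball c r \<subseteq> S'" by blast
    have "cball ((1/t) *\<^sub>R (c - q)) (r / t) \<subseteq> S"
    proof
      fix z assume z: "z \<in> cball ((1/t) *\<^sub>R (c - q)) (r / t)"
      have "dist c (q + t *\<^sub>R z) = t * dist ((1/t) *\<^sub>R (c - q)) z"
      proof -
        have "c - (q + t *\<^sub>R z) = t *\<^sub>R ((1/t) *\<^sub>R (c - q) - z)" using t by (simp add: algebra_simps)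
        then show ?thesis using t by (simp add: dist_norm)
      qed
      also have "\<dots> \<le> t * (r / t)" using z t by (intro mult_left_mono) auto
      finally have "q + t *\<^sub>R z \<in> cball c r" using t by simp
      then have "q + t *\<^sub>R z \<in> (\<lambda>x. q + t *\<^sub>R x) ` S" using c sub by blast
      then obtain w where "w \<in> S" "q + t *\<^sub>R z = q + t *\<^sub>R w" by blast
      then show "z \<in> S" using t by simp
    qed
    then have "2 * (r / t) \<in> ?B" using r t by fastforce
    then have "2 * (r / t) \<le> Sup ?B" using bddB by (rule cSup_upper)
    then show "x \<le> t * Sup ?B" using t x by (simp add: field_simps)
  qed
  then show ?thesis unfolding inner_diam_def .
qed

lemma inner_diam_nonneg:
  fixes S :: "'a::euclidean_space set"
  assumes b: "bounded S" and ne: "S \<noteq> {}"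
  shows "0 \<le> inner_diam S"
proof -
  let ?B = "{2 * r |c r. 0 \<le> r \<and> cball c r \<subseteq> S}"
  obtain M where M: "\<And>c r. 0 \<le> r \<Longrightarrow> cball c r \<subseteq> S \<Longrightarrow> 2 * r \<le> M" using cball_in_bounded[OF b] by blast
  have bddB: "bdd_above ?B" unfolding bdd_above_def using M by blast
  obtain y where y: "y \<in> S" using ne by blast
  have "cball y 0 \<subseteq> S" using y by simp
  then have "2 * 0 \<in> ?B" by blast
  then have "2 * 0 \<le> Sup ?B" using bddB by (rule cSup_upper)
  then show ?thesis unfolding inner_diam_def by simp
qed

lemma inner_diam_pos_ball:
  fixes S :: "'a::euclidean_space set"
  assumes b: "bounded S" and c: "cball y e \<subseteq> S" and e: "0 < e"
  shows "0 < inner_diam S"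
proof -
  let ?B = "{2 * r |c r. 0 \<le> r \<and> cball c r \<subseteq> S}"
  obtain M where M: "\<And>c r. 0 \<le> r \<Longrightarrow> cball c r \<subseteq> S \<Longrightarrow> 2 * r \<le> M" using cball_in_bounded[OF b] by blast
  have bddB: "bdd_above ?B" unfolding bdd_above_def using M by blast
  have "2 * e \<in> ?B" using c e by fastforce
  then have "2 * e \<le> Sup ?B" using bddB by (rule cSup_upper)
  then show ?thesis unfolding inner_diam_def using e by simp
qed

lemma simplex_bounded: "bounded (simplex_set n (v :: nat \<Rightarrow> 'a::euclidean_space))"
  unfolding simplex_set_def by (intro compact_imp_bounded compact_convex_hull finite_imp_compact) simp

lemma simplex_nonempty: "simplex_set n v \<noteq> {}"
  unfolding simplex_set_def by simp

lemma simplex_inner_pos: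
  fixes v :: "nat \<Rightarrow> 'a::euclidean_space"
  assumes n: "n = DIM('a)" and s: "is_nsimplex n v"
  shows "0 < inner_diam (simplex_set n v)"
proof -
  let ?S = "v ` {..n}"
  have inj: "inj_on v {..n}" and ind: "\<not> affine_dependent ?S" using s by (auto simp: is_nsimplex_def)
  have card: "card ?S = n + 1" using card_image[OF inj] by simp
  have n1: "1 \<le> n" using n DIM_positive[where 'a='a] by linarith
  define u where "u (x::'a) = 1 / (real n + 1)" for x
  have "(\<Sum>x\<in>?S. u x *\<^sub>R x) \<in> interior (convex hull ?S)"
  proof -
    have "(\<forall>x \<in> ?S. 0 < u x \<and> u x < 1)" using n1 by (simp add: u_def)
    moreover have "sum u ?S = 1" using card by (simp add: u_def)
    ultimately show ?thesis unfolding interior_convex_hull_explicit[OF ind] using card n by auto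
  qed
  then obtain y where y: "y \<in> interior (convex hull ?S)" by blast
  obtain e where e: "0 < e" "ball y e \<subseteq> interior (convex hull ?S)"
    using open_contains_ball[of "interior (convex hull ?S)"] y by auto
  have "cball y (e/2) \<subseteq> convex hull ?S"
  proof -
    have "cball y (e/2) \<subseteq> ball y e" using e by (simp add: cball_subset_ball_iff)
    then show ?thesis using e(2) interior_subset[of "convex hull ?S"] by blast
  qed
  then have "cball y (e/2) \<subseteq> simplex_set n v" unfolding simplex_set_def .
  then show ?thesis by (rule inner_diam_pos_ball[OF simplex_bounded]) (use e in simp)
qed

lemma cc_cases: "cc g j = 1 \<or> cc g j = 1/2" by (simp add: cc_def)

lemma kant:
  fixes g g0 n :: nat and \<tau> :: "nat \<Rightarrow> nat"
  shows "(\<Sum>k=1..n. cc g (\<tau> k) / cc g0 k) * (\<Sum>k=1..n. cc g0 k / cc g (\<tau> k)) \<le> 25/16 * (real n)^2"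
proof -
  define A where "A = (\<Sum>k=1..n. cc g (\<tau> k) / cc g0 k)"
  define B where "B = (\<Sum>k=1..n. cc g0 k / cc g (\<tau> k))"
  have t: "cc g (\<tau> k) / cc g0 k + cc g0 k / cc g (\<tau> k) \<le> 5/2" for k
    by (cases "\<tau> k \<le> g"; cases "k \<le> g0"; simp add: cc_def)
  have A0: "0 \<le> A" unfolding A_def by (intro sum_nonneg divide_nonneg_pos) (auto intro: less_imp_le cc_pos cc_pos)
  have B0: "0 \<le> B" unfolding B_def by (intro sum_nonneg divide_nonneg_pos) (auto intro: less_imp_le cc_pos cc_pos)
  have "A + B = (\<Sum>k=1..n. cc g (\<tau> k) / cc g0 k + cc g0 k / cc g (\<tau> k))"
    unfolding A_def B_def by (simp add: sum.distrib)
  also have "\<dots> \<le> (\<Sum>k=1..n. 5/2)" by (rule sum_mono) (rule t)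
  also have "\<dots> = 5/2 * real n" by simp
  finally have AB: "A + B \<le> 5/2 * real n" .
  have "(A + B)^2 \<le> (5/2 * real n)^2" using AB A0 B0 by (intro power_mono) auto
  moreover have "4 * (A * B) \<le> (A + B)^2"
  proof -
    have "(A + B)^2 - 4 * (A * B) = (A - B)^2" by (simp add: power2_eq_square algebra_simps)
    then show ?thesis using zero_le_power2[of "A - B"] by linarith
  qed
  moreover have "(5/2 * real n)^2 = 25/4 * (real n)^2" by (simp add: power_mult_distrib power2_eq_square)
  ultimately have "A * B \<le> 25/16 * (real n)^2" by linarith
  then show ?thesis unfolding A_def B_def .
qed

lemma lhs_bound:
  fixes T0 :: "'a::euclidean_space tsimplex"
  assumes n: "n = DIM('a)" and tag: "is_tagged_nsimplex n T0" and T: "T \<in> maubach_desc n T0"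
  shows "shape_reg (simplex_set n (fst T)) \<le> 25/16 * (real n)^2 * shape_reg (simplex_set n (fst T0))"
proof -
  define g0 where "g0 = snd T0"
  define v where "v = fst T0"
  have g0r: "g0 \<in> {1..n}" and sv: "is_nsimplex n v" using tag by (auto simp: is_tagged_nsimplex_def g0_def v_def)
  have n1: "1 \<le> n" using g0r by simp
  obtain ofs h \<tau> \<epsilon> where vD: "valid n ofs h \<tau> \<epsilon> (snd T)"
    and fT: "\<forall>j\<le>n. fst T j = phi n g0 v (zv ofs h \<tau> \<epsilon> (snd T) j)"
    using desc_frame[OF n1 _ T] tag unfolding g0_def v_def is_tagged_nsimplex_def by blast
  define g where "g = snd T"
  have h: "0 < h" using vD by (simp add: valid_def)
  have vR: "valid n (\<lambda>_. 0) 1 id (\<lambda>_. 1) g0" using g0r by (auto simp: valid_def)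
  define SU where "SU = (\<Sum>k=1..n. cc g (\<tau> k) / cc g0 k)"
  define SL where "SL = (\<Sum>k=1..n. cc g0 k / cc g (\<tau> k))"
  have SU0: "0 < SU" unfolding SU_def using n1 by (intro sum_pos divide_pos_pos cc_pos) auto
  have SL0: "0 < SL" unfolding SL_def using n1 by (intro sum_pos divide_pos_pos cc_pos) auto
  let ?ST = "simplex_set n (fst T)"
  let ?S0 = "simplex_set n v"
  obtain mm where mm: "\<forall>j\<le>n. \<forall>i\<le>n. mm i \<le> kap0 n g0 (zv ofs h \<tau> \<epsilon> g j) i"
    and mms: "(\<Sum>i\<le>n. mm i) = 1 - (h / 1) * (\<Sum>k=1..n. cc g (\<tau> k) / cc g0 (id k))"
    using frame_bound[OF vR vD] unfolding g_def by blast
  have U: "?ST \<subseteq> (\<lambda>x. (\<Sum>i\<le>n. mm i *\<^sub>R v i) + (h * SU) *\<^sub>R x) ` ?S0"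
  proof (rule hull_homothety)
    show "\<forall>j\<le>n. \<exists>a. (\<forall>i\<le>n. mm i \<le> a i) \<and> (\<Sum>i\<le>n. a i) = 1 \<and> fst T j = (\<Sum>i\<le>n. a i *\<^sub>R v i)"
    proof (intro allI impI)
      fix j assume j: "j \<le> n"
      show "\<exists>a. (\<forall>i\<le>n. mm i \<le> a i) \<and> (\<Sum>i\<le>n. a i) = 1 \<and> fst T j = (\<Sum>i\<le>n. a i *\<^sub>R v i)"
        by (rule exI[of _ "kap0 n g0 (zv ofs h \<tau> \<epsilon> g j)"]) (use mm j fT kap_sum in \<open>auto simp: phi_def g_def\<close>)
    qed
    show "(\<Sum>i\<le>n. mm i) = 1 - h * SU" using mms by (simp add: SU_def)
    show "0 < h * SU" using h SU0 by simp
  qed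
  obtain mm2 where mm2: "\<forall>i\<le>n. \<forall>j\<le>n. mm2 j \<le> kap n ofs h \<tau> \<epsilon> g (zv0 g0 i) j"
    and mm2s: "(\<Sum>j\<le>n. mm2 j) = 1 - (1 / h) * (\<Sum>k=1..n. cc g0 (id k) / cc g (\<tau> k))"
    using frame_bound[OF vD vR] unfolding g_def by blast
  have L: "?S0 \<subseteq> (\<lambda>x. (\<Sum>j\<le>n. mm2 j *\<^sub>R fst T j) + (SL / h) *\<^sub>R x) ` ?ST"
  proof (rule hull_homothety)
    show "\<forall>i\<le>n. \<exists>a. (\<forall>j\<le>n. mm2 j \<le> a j) \<and> (\<Sum>j\<le>n. a j) = 1 \<and> v i = (\<Sum>j\<le>n. a j *\<^sub>R fst T j)"
    proof (intro allI impI)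
      fix i assume i: "i \<le> n"
      define a where "a j = kap n ofs h \<tau> \<epsilon> g (zv0 g0 i) j" for j
      have as: "(\<Sum>j\<le>n. a j) = 1" unfolding a_def by (rule kap_sum)
      have "v i = phi n g0 v (zv0 g0 i)" by (rule phi_ref[OF i, symmetric])
      also have "\<dots> = phi n g0 v (\<lambda>k. \<Sum>j\<in>{..n}. a j * zv ofs h \<tau> \<epsilon> g j k)"
        by (rule phi_cong) (use reconstruct[OF vD[folded g_def]] in \<open>simp add: a_def\<close>)
      also have "\<dots> = (\<Sum>j\<in>{..n}. a j *\<^sub>R phi n g0 v (zv ofs h \<tau> \<epsilon> g j))"
        by (rule phi_affine) (use as in auto)
      also have "\<dots> = (\<Sum>j\<le>n. a j *\<^sub>R fst T j)" using fT by (simp add: g_def)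
      finally show "\<exists>a. (\<forall>j\<le>n. mm2 j \<le> a j) \<and> (\<Sum>j\<le>n. a j) = 1 \<and> v i = (\<Sum>j\<le>n. a j *\<^sub>R fst T j)"
        using as mm2 i unfolding a_def by blast
    qed
    show "(\<Sum>j\<le>n. mm2 j) = 1 - SL / h" using mm2s by (simp add: SL_def)
    show "0 < SL / h" using h SL0 by simp
  qed
  have R: "outer_diam ?ST \<le> (h * SU) * outer_diam ?S0"
    by (rule outer_scale[OF U]) (use h SU0 simplex_bounded simplex_nonempty in auto)
  have r: "inner_diam ?S0 \<le> (SL / h) * inner_diam ?ST"
    by (rule inner_scale[OF L]) (use h SL0 simplex_bounded simplex_nonempty in auto)
  have r0: "0 < inner_diam ?S0" by (rule simplex_inner_pos[OF n sv])
  have R0: "0 \<le> outer_diam ?S0" by (rule outer_diam_nonneg[OF simplex_bounded simplex_nonempty])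
  have rT: "inner_diam ?S0 / (SL / h) \<le> inner_diam ?ST" using r h SL0 by (simp add: field_simps)
  have rTp: "0 < inner_diam ?S0 / (SL / h)" using r0 h SL0 by simp
  have "shape_reg ?ST = outer_diam ?ST / inner_diam ?ST" by (simp add: shape_reg_def)
  also have "\<dots> \<le> (h * SU) * outer_diam ?S0 / inner_diam ?ST"
    using R rT rTp by (intro divide_right_mono) auto
  also have "\<dots> \<le> (h * SU) * outer_diam ?S0 / (inner_diam ?S0 / (SL / h))"
  proof (rule divide_left_mono)
    show "inner_diam ?S0 / (SL / h) \<le> inner_diam ?ST" by (rule rT)
    show "0 \<le> h * SU * outer_diam ?S0" using R0 h SU0 by simp
    show "0 < inner_diam ?ST * (inner_diam ?S0 / (SL / h))" using rT rTp by (intro mult_pos_pos) auto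
  qed
  also have "\<dots> = (SU * SL) * shape_reg ?S0" using h SL0 r0 by (simp add: shape_reg_def field_simps)
  also have "\<dots> \<le> 25/16 * (real n)^2 * shape_reg ?S0"
  proof (rule mult_right_mono)
    show "SU * SL \<le> 25/16 * (real n)^2" unfolding SU_def SL_def by (rule kant)
    show "0 \<le> shape_reg ?S0" using R0 r0 by (simp add: shape_reg_def)
  qed
  finally show ?thesis by (simp add: v_def)
qed

definition AA :: "nat \<Rightarrow> (nat \<Rightarrow> 'a::euclidean_space) \<Rightarrow> nat \<Rightarrow> 'a \<Rightarrow> real" where
  "AA n \<pi> k x = (if k = 0 then 1 else if k \<le> n then x \<bullet> \<pi> k else 0)"

definition ff :: "nat \<Rightarrow> (nat \<Rightarrow> 'a::euclidean_space) \<Rightarrow> nat \<Rightarrow> 'a \<Rightarrow> real" where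
  "ff n \<pi> i x = AA n \<pi> i x - AA n \<pi> (Suc i) x"

lemma piB: "bij_betw \<pi> {1..n} Basis \<Longrightarrow> j \<in> {1..n} \<Longrightarrow> \<pi> j \<in> Basis"
  using bij_betwE by blast

lemma pinner:
  assumes bij: "bij_betw \<pi> {1..n} Basis" and i: "i \<in> {1..n}" and j: "j \<in> {1..n}"
  shows "\<pi> i \<bullet> \<pi> j = (if i = j then 1 else 0)"
proof -
  have "\<pi> i = \<pi> j \<longleftrightarrow> i = j" using bij_betw_imp_inj_on[OF bij] i j by (auto simp: inj_on_def)
  then show ?thesis using piB[OF bij i] piB[OF bij j] by (simp add: inner_Basis)
qed

lemma kv_inner:
  assumes bij: "bij_betw \<pi> {1..n} Basis" and m: "m \<in> {1..n}" and j: "j \<le> n"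
  shows "kuhn_vertices \<pi> j \<bullet> \<pi> m = (if m \<le> j then 1 else 0)"
proof -
  have "kuhn_vertices \<pi> j \<bullet> \<pi> m = (\<Sum>l\<in>{1..j}. \<pi> l \<bullet> \<pi> m)" by (simp add: kuhn_vertices_def inner_sum_left)
  also have "\<dots> = (\<Sum>l\<in>{1..j}. if l = m then 1 else 0)"
    by (rule sum.cong) (use pinner[OF bij] m j in auto)
  also have "\<dots> = (if m \<le> j then 1 else 0)" using m by simp
  finally show ?thesis .
qed

lemma AA_kv:
  assumes bij: "bij_betw \<pi> {1..n} Basis" and j: "j \<le> n"
  shows "AA n \<pi> k (kuhn_vertices \<pi> j) = (if k \<le> j then 1 else 0)"
  using kv_inner[OF bij _ j, of k] j by (auto simp: AA_def)

lemma ff_kv: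
  assumes bij: "bij_betw \<pi> {1..n} Basis" and j: "j \<le> n"
  shows "ff n \<pi> i (kuhn_vertices \<pi> j) = (if i = j then 1 else 0)"
  using AA_kv[OF bij j] by (auto simp: ff_def)

lemma ff_sum: "(\<Sum>i\<le>n. ff n \<pi> i x) = 1"
proof -
  have "(\<Sum>i\<le>n. ff n \<pi> i x) = AA n \<pi> 0 x - AA n \<pi> (Suc n) x"
    unfolding ff_def by (rule sum_telescope)
  then show ?thesis by (simp add: AA_def)
qed

lemma ff_repr:
  assumes bij: "bij_betw \<pi> {1..n} Basis"
  shows "(\<Sum>i\<le>n. ff n \<pi> i x *\<^sub>R kuhn_vertices \<pi> i) = x"
proof (rule euclidean_eqI)
  fix b :: 'a assume b: "b \<in> Basis"
  then obtain m where m: "m \<in> {1..n}" "b = \<pi> m" using bij by (metis bij_betw_def imageE)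
  have "(\<Sum>i\<le>n. ff n \<pi> i x *\<^sub>R kuhn_vertices \<pi> i) \<bullet> \<pi> m = (\<Sum>i\<le>n. ff n \<pi> i x * (if m \<le> i then 1 else 0))"
    by (simp add: inner_sum_left kv_inner[OF bij m(1)])
  also have "\<dots> = (\<Sum>i\<in>{m..n}. ff n \<pi> i x)"
  proof -
    have "{i\<in>{..n}. m \<le> i} = {m..n}" by auto
    then show ?thesis by (simp add: sum.inter_filter[symmetric] if_distrib cong: if_cong)
  qed
  also have "\<dots> = AA n \<pi> m x - AA n \<pi> (Suc n) x" unfolding ff_def by (rule tele) (use m in auto)
  also have "\<dots> = x \<bullet> \<pi> m" using m by (simp add: AA_def)
  finally show "(\<Sum>i\<le>n. ff n \<pi> i x *\<^sub>R kuhn_vertices \<pi> i) \<bullet> b = x \<bullet> b" using m by simp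
qed

lemma AA_affine: "u + v = 1 \<Longrightarrow> AA n \<pi> k (u *\<^sub>R x + v *\<^sub>R y) = u * AA n \<pi> k x + v * AA n \<pi> k y"
  by (auto simp: AA_def inner_add_left)

lemma ff_affine: "u + v = 1 \<Longrightarrow> ff n \<pi> i (u *\<^sub>R x + v *\<^sub>R y) = u * ff n \<pi> i x + v * ff n \<pi> i y"
  by (simp add: ff_def AA_affine algebra_simps)

lemma AA_lip:
  assumes bij: "bij_betw \<pi> {1..n} Basis"
  shows "\<bar>AA n \<pi> k x - AA n \<pi> k y\<bar> \<le> dist x y"
proof (cases "1 \<le> k \<and> k \<le> n")
  case True
  then have "\<pi> k \<in> Basis" using piB[OF bij] by auto
  then have "\<bar>(x - y) \<bullet> \<pi> k\<bar> \<le> norm (x - y)" by (rule Basis_le_norm)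
  then show ?thesis using True by (simp add: AA_def dist_norm inner_diff_left)
qed (auto simp: AA_def)

lemma ff_lip:
  assumes bij: "bij_betw \<pi> {1..n} Basis"
  shows "\<bar>ff n \<pi> i x - ff n \<pi> i y\<bar> \<le> 2 * dist x y"
  using AA_lip[OF bij, of i x y] AA_lip[OF bij, of "Suc i" x y] by (simp add: ff_def)

lemma K_char1:
  assumes bij: "bij_betw \<pi> {1..n} Basis" and x: "x \<in> simplex_set n (kuhn_vertices \<pi>)" and i: "i \<le> n"
  shows "0 \<le> ff n \<pi> i x"
proof -
  have "simplex_set n (kuhn_vertices \<pi>) \<subseteq> {x. \<forall>i\<le>n. 0 \<le> ff n \<pi> i x}"
    unfolding simplex_set_def
  proof (rule hull_minimal)
    show "kuhn_vertices \<pi> ` {..n} \<subseteq> {x. \<forall>i\<le>n. 0 \<le> ff n \<pi> i x}" using ff_kv[OF bij] by auto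
    show "convex {x. \<forall>i\<le>n. 0 \<le> ff n \<pi> i x}"
      by (rule convexI) (auto simp: ff_affine)
  qed
  then show ?thesis using x i by blast
qed

lemma K_char2:
  assumes bij: "bij_betw \<pi> {1..n} Basis" and x: "\<forall>i\<le>n. 0 \<le> ff n \<pi> i x"
  shows "x \<in> simplex_set n (kuhn_vertices \<pi>)"
proof -
  have "(\<Sum>i\<in>{..n}. ff n \<pi> i x *\<^sub>R kuhn_vertices \<pi> i) \<in> convex hull (kuhn_vertices \<pi> ` {..n})"
    by (rule convex_sum[OF _ convex_convex_hull ff_sum]) (use x in \<open>auto intro: hull_inc\<close>)
  then show ?thesis using ff_repr[OF bij, of x] by (simp add: simplex_set_def)
qed

lemma face_zero:
  assumes bij: "bij_betw \<pi> {1..n} Basis" and i: "i \<le> n"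
    and y: "y \<in> convex hull (kuhn_vertices \<pi> ` ({..n} - {i}))"
  shows "ff n \<pi> i y = 0"
proof -
  have "convex hull (kuhn_vertices \<pi> ` ({..n} - {i})) \<subseteq> {x. ff n \<pi> i x = 0}"
  proof (rule hull_minimal)
    show "kuhn_vertices \<pi> ` ({..n} - {i}) \<subseteq> {x. ff n \<pi> i x = 0}" using ff_kv[OF bij] by auto
    show "convex {x. ff n \<pi> i x = 0}" by (rule convexI) (auto simp: ff_affine)
  qed
  then show ?thesis using y by blast
qed

lemma kv0: "kuhn_vertices \<pi> 0 = 0" by (simp add: kuhn_vertices_def)

lemma kv_in: "j \<le> n \<Longrightarrow> kuhn_vertices \<pi> j \<in> simplex_set n (kuhn_vertices \<pi>)"
  unfolding simplex_set_def by (rule hull_inc) auto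

lemma norm_kvn:
  assumes bij: "bij_betw \<pi> {1..n} Basis"
  shows "norm (kuhn_vertices \<pi> n) = sqrt (real n)"
proof -
  have "kuhn_vertices \<pi> n \<bullet> kuhn_vertices \<pi> n = (\<Sum>l\<in>{1..n}. kuhn_vertices \<pi> n \<bullet> \<pi> l)"
    by (simp add: kuhn_vertices_def inner_sum_right)
  also have "\<dots> = (\<Sum>l\<in>{1..n}. 1)" by (rule sum.cong) (use kv_inner[OF bij] in auto)
  finally show ?thesis by (simp add: norm_eq_sqrt_inner)
qed

lemma K_outer:
  assumes bij: "bij_betw \<pi> {1..n} Basis"
  shows "sqrt (real n) \<le> outer_diam (simplex_set n (kuhn_vertices \<pi>))"
  unfolding outer_diam_def
proof (rule cInf_greatest)
  obtain c r where "simplex_set n (kuhn_vertices \<pi>) \<subseteq> cball c r" using simplex_bounded bounded_subset_cball by blast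
  then show "{2 * r |c r. simplex_set n (kuhn_vertices \<pi>) \<subseteq> cball c r} \<noteq> {}" by blast
next
  fix x assume "x \<in> {2 * r |c r. simplex_set n (kuhn_vertices \<pi>) \<subseteq> cball c r}"
  then obtain c r where x: "x = 2 * r" and c: "simplex_set n (kuhn_vertices \<pi>) \<subseteq> cball c r" by blast
  have "dist c (kuhn_vertices \<pi> 0) \<le> r" "dist c (kuhn_vertices \<pi> n) \<le> r" using c kv_in[of 0 n \<pi>] kv_in[of n n \<pi>] by auto
  moreover have "dist (kuhn_vertices \<pi> 0) (kuhn_vertices \<pi> n) \<le> dist c (kuhn_vertices \<pi> 0) + dist c (kuhn_vertices \<pi> n)"
    by (rule dist_triangle3)
  moreover have "dist (kuhn_vertices \<pi> 0) (kuhn_vertices \<pi> n) = sqrt (real n)" using norm_kvn[OF bij] by (simp add: kv0 dist_norm)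
  ultimately show "sqrt (real n) \<le> x" using x by linarith
qed

lemma K_diam:
  assumes bij: "bij_betw \<pi> {1..n} Basis"
  shows "sqrt (real n) \<le> diameter (simplex_set n (kuhn_vertices \<pi>))"
proof -
  have "dist (kuhn_vertices \<pi> 0) (kuhn_vertices \<pi> n) \<le> diameter (simplex_set n (kuhn_vertices \<pi>))"
    by (rule diameter_bounded_bound[OF simplex_bounded kv_in kv_in]) auto
  then show ?thesis using norm_kvn[OF bij] by (simp add: kv0 dist_norm)
qed

lemma K_inner_upper:
  assumes bij: "bij_betw \<pi> {1..n} Basis" and n2: "2 \<le> n"
  shows "inner_diam (simplex_set n (kuhn_vertices \<pi>)) \<le> 2 / (2 + (real n - 1) * sqrt 2)"
  unfolding inner_diam_def
proof (rule cSup_least)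
  have "cball (kuhn_vertices \<pi> 0) 0 \<subseteq> simplex_set n (kuhn_vertices \<pi>)" using kv_in[of 0 n \<pi>] by simp
  then show "{2 * r |c r. 0 \<le> r \<and> cball c r \<subseteq> simplex_set n (kuhn_vertices \<pi>)} \<noteq> {}" by blast
next
  fix x assume "x \<in> {2 * r |c r. 0 \<le> r \<and> cball c r \<subseteq> simplex_set n (kuhn_vertices \<pi>)}"
  then obtain c \<rho> where x: "x = 2 * \<rho>" and r: "0 \<le> \<rho>" and c: "cball c \<rho> \<subseteq> simplex_set n (kuhn_vertices \<pi>)" by blast
  have inK: "0 \<le> ff n \<pi> i p" if "dist c p \<le> \<rho>" "i \<le> n" for p i
    using K_char1[OF bij _ that(2)] c that(1) by auto
  have b1: "\<pi> 1 \<in> Basis" and bn: "\<pi> n \<in> Basis" using piB[OF bij] n2 by auto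
  have p0: "\<rho> \<le> ff n \<pi> 0 c"
  proof -
    have "0 \<le> ff n \<pi> 0 (c + \<rho> *\<^sub>R \<pi> 1)" using r b1 by (intro inK) (auto simp: dist_norm)
    moreover have "ff n \<pi> 0 (c + \<rho> *\<^sub>R \<pi> 1) = ff n \<pi> 0 c - \<rho>"
      using n2 b1 by (simp add: ff_def AA_def inner_add_left)
    ultimately show ?thesis by simp
  qed
  have pn: "\<rho> \<le> ff n \<pi> n c"
  proof -
    have "0 \<le> ff n \<pi> n (c - \<rho> *\<^sub>R \<pi> n)" using r bn by (intro inK) (auto simp: dist_norm)
    moreover have "ff n \<pi> n (c - \<rho> *\<^sub>R \<pi> n) = ff n \<pi> n c - \<rho>"
      using n2 bn by (simp add: ff_def AA_def inner_diff_left)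
    ultimately show ?thesis by simp
  qed
  have pm: "sqrt 2 * \<rho> \<le> ff n \<pi> i c" if i: "1 \<le> i" "i < n" for i
  proof -
    define d where "d = \<pi> (Suc i) - \<pi> i"
    have ii: "\<pi> i \<bullet> \<pi> i = 1" "\<pi> (Suc i) \<bullet> \<pi> (Suc i) = 1" "\<pi> i \<bullet> \<pi> (Suc i) = 0" "\<pi> (Suc i) \<bullet> \<pi> i = 0"
      using pinner[OF bij, of i i] pinner[OF bij, of "Suc i" "Suc i"] pinner[OF bij, of i "Suc i"] pinner[OF bij, of "Suc i" i] i
      by auto
    have nd: "norm d = sqrt 2" unfolding d_def norm_eq_sqrt_inner using ii by (simp add: inner_diff_left inner_diff_right)
    have "0 \<le> ff n \<pi> i (c + (\<rho> / sqrt 2) *\<^sub>R d)"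
      using r nd i by (intro inK) (auto simp: dist_norm)
    moreover have "ff n \<pi> i (c + (\<rho> / sqrt 2) *\<^sub>R d) = ff n \<pi> i c - 2 * (\<rho> / sqrt 2)"
      using i ii by (simp add: ff_def AA_def d_def inner_add_left inner_diff_left)
    moreover have "2 * (\<rho> / sqrt 2) = sqrt 2 * \<rho>"
      by (metis (no_types, opaque_lifting) divide_self_if mult.commute real_div_sqrt times_divide_eq_left zero_le_numeral
          real_sqrt_gt_0_iff zero_less_numeral less_numeral_extra(3))
    ultimately show ?thesis by simp
  qed
  obtain m where m: "n = Suc m" using n2 by (cases n) auto
  have "1 = (\<Sum>i\<le>n. ff n \<pi> i c)" by (simp add: ff_sum)
  also have "\<dots> = ff n \<pi> 0 c + (\<Sum>i=1..m. ff n \<pi> i c) + ff n \<pi> n c"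
    unfolding sum_atMost_split0 using m by simp
  also have "\<dots> \<ge> \<rho> + (\<Sum>i=1..m. sqrt 2 * \<rho>) + \<rho>"
    using p0 pn sum_mono[of "{1..m}" "\<lambda>i. sqrt 2 * \<rho>" "\<lambda>i. ff n \<pi> i c"] pm m by force
  finally have "\<rho> * (2 + real m * sqrt 2) \<le> 1" by (simp add: algebra_simps)
  moreover have "real m = real n - 1" using m by simp
  ultimately have "\<rho> * (2 + (real n - 1) * sqrt 2) \<le> 1" by simp
  moreover have "0 < 2 + (real n - 1) * sqrt 2" using n2 by (simp add: add_pos_nonneg)
  ultimately show "x \<le> 2 / (2 + (real n - 1) * sqrt 2)" using x by (simp add: field_simps)
qed

lemma K_inner_pos:
  assumes bij: "bij_betw \<pi> {1..n} Basis" and n1: "1 \<le> n"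
  shows "0 < inner_diam (simplex_set n (kuhn_vertices \<pi>))"
proof -
  define c0 where "c0 = (\<Sum>l\<in>{1..n}. ((real n + 1 - real l) / (real n + 1)) *\<^sub>R \<pi> l)"
  have ci: "c0 \<bullet> \<pi> m = (real n + 1 - real m) / (real n + 1)" if m: "m \<in> {1..n}" for m
  proof -
    have "c0 \<bullet> \<pi> m = (\<Sum>l\<in>{1..n}. ((real n + 1 - real l) / (real n + 1)) * (if l = m then 1 else 0))"
      unfolding c0_def inner_sum_left by (rule sum.cong) (use pinner[OF bij _ m] in auto)
    also have "\<dots> = (real n + 1 - real m) / (real n + 1)" using m by (simp add: if_distrib cong: if_cong)
    finally show ?thesis .
  qed
  have Ac: "AA n \<pi> k c0 = (real n + 1 - real k) / (real n + 1)" if "k \<le> Suc n" for k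
    using that ci by (cases "k = 0"; cases "k = Suc n") (auto simp: AA_def)
  have fc: "ff n \<pi> i c0 = 1 / (real n + 1)" if "i \<le> n" for i
    using Ac[of i] Ac[of "Suc i"] that by (simp add: ff_def field_simps)
  define e where "e = 1 / (2 * (real n + 1))"
  have e0: "0 < e" by (simp add: e_def)
  have "cball c0 e \<subseteq> simplex_set n (kuhn_vertices \<pi>)"
  proof
    fix x assume x: "x \<in> cball c0 e"
    have "\<forall>i\<le>n. 0 \<le> ff n \<pi> i x"
    proof (intro allI impI)
      fix i assume i: "i \<le> n"
      have "\<bar>ff n \<pi> i c0 - ff n \<pi> i x\<bar> \<le> 2 * dist c0 x" by (rule ff_lip[OF bij])
      moreover have "2 * dist c0 x \<le> 1 / (real n + 1)" using x by (simp add: e_def field_simps)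
      ultimately show "0 \<le> ff n \<pi> i x" using fc[OF i] by linarith
    qed
    then show "x \<in> simplex_set n (kuhn_vertices \<pi>)" by (rule K_char2[OF bij])
  qed
  then show ?thesis by (rule inner_diam_pos_ball[OF simplex_bounded _ e0])
qed

lemma K_height_upper:
  assumes bij: "bij_betw \<pi> {1..n} Basis" and n2: "2 \<le> n"
  shows "min_height n (kuhn_vertices \<pi>) \<le> 1 / sqrt 2"
proof -
  let ?K = "simplex_set n (kuhn_vertices \<pi>)"
  let ?F = "\<lambda>i. convex hull (kuhn_vertices \<pi> ` ({..n} - {i}))"
  let ?H = "\<lambda>i. SUP x\<in>?K. infdist x (?F i)"
  have "min_height n (kuhn_vertices \<pi>) \<le> ?H 1"
    unfolding min_height_def by (rule Min_le) (use n2 in auto)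
  also have "?H 1 \<le> 1 / sqrt 2"
  proof (rule cSUP_least)
    show "?K \<noteq> {}" by (rule simplex_nonempty)
  next
    fix x assume x: "x \<in> ?K"
    define t where "t = ff n \<pi> 1 x"
    have t0: "0 \<le> t" using K_char1[OF bij x, of 1] n2 by (simp add: t_def)
    have t1: "t \<le> 1"
    proof -
      have "t \<le> (\<Sum>i\<le>n. ff n \<pi> i x)" unfolding t_def
        by (rule member_le_sum) (use K_char1[OF bij x] n2 in auto)
      then show ?thesis by (simp add: ff_sum)
    qed
    define p where "p = x - (t / 2) *\<^sub>R (\<pi> 1 - \<pi> 2)"
    define cf where "cf i = ff n \<pi> i x + (if i = 0 \<or> i = 2 then t / 2 else 0)" for i
    let ?A = "{..n} - {1::nat}"
    have fA: "finite ?A" by simp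
    have AF: "{i\<in>?A. i = 0 \<or> i = 2} = {0, 2}" using n2 by auto
    have s1: "(\<Sum>i\<in>?A. cf i) = 1"
    proof -
      have "(\<Sum>i\<in>?A. cf i) = (\<Sum>i\<in>?A. ff n \<pi> i x) + (\<Sum>i\<in>?A. if i = 0 \<or> i = 2 then t / 2 else 0)"
        by (simp add: cf_def sum.distrib)
      also have "(\<Sum>i\<in>?A. if i = 0 \<or> i = 2 then t / 2 else 0) = t"
      proof -
        have "(\<Sum>i\<in>?A. if i = 0 \<or> i = 2 then t / 2 else 0) = (\<Sum>i\<in>{i\<in>?A. i = 0 \<or> i = 2}. t / 2)"
          by (rule sum.inter_filter[symmetric, OF fA])
        also have "\<dots> = t" unfolding AF by simp
        finally show ?thesis .
      qed
      also have "(\<Sum>i\<in>?A. ff n \<pi> i x) = (\<Sum>i\<le>n. ff n \<pi> i x) - ff n \<pi> 1 x"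
        using n2 by (simp add: sum_diff1)
      finally show ?thesis by (simp add: ff_sum t_def)
    qed
    have s2: "(\<Sum>i\<in>?A. cf i *\<^sub>R kuhn_vertices \<pi> i) = p"
    proof -
      have "(\<Sum>i\<in>?A. cf i *\<^sub>R kuhn_vertices \<pi> i) = (\<Sum>i\<in>?A. ff n \<pi> i x *\<^sub>R kuhn_vertices \<pi> i)
            + (\<Sum>i\<in>?A. (if i = 0 \<or> i = 2 then t / 2 else 0) *\<^sub>R kuhn_vertices \<pi> i)"
        by (simp add: cf_def sum.distrib scaleR_add_left)
      also have "(\<Sum>i\<in>?A. (if i = 0 \<or> i = 2 then t / 2 else 0) *\<^sub>R kuhn_vertices \<pi> i)
            = (t / 2) *\<^sub>R kuhn_vertices \<pi> 0 + (t / 2) *\<^sub>R kuhn_vertices \<pi> 2"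
      proof -
        have "(\<Sum>i\<in>?A. (if i = 0 \<or> i = 2 then t / 2 else 0) *\<^sub>R kuhn_vertices \<pi> i)
            = (\<Sum>i\<in>?A. if i = 0 \<or> i = 2 then (t / 2) *\<^sub>R kuhn_vertices \<pi> i else 0)"
          by (rule sum.cong) auto
        also have "\<dots> = (\<Sum>i\<in>{i\<in>?A. i = 0 \<or> i = 2}. (t / 2) *\<^sub>R kuhn_vertices \<pi> i)"
          by (rule sum.inter_filter[symmetric, OF fA])
        also have "\<dots> = (\<Sum>i\<in>{0,2}. (t / 2) *\<^sub>R kuhn_vertices \<pi> i)" unfolding AF ..
        finally show ?thesis by simp
      qed
      also have "(\<Sum>i\<in>?A. ff n \<pi> i x *\<^sub>R kuhn_vertices \<pi> i) = x - t *\<^sub>R kuhn_vertices \<pi> 1"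
        using n2 ff_repr[OF bij, of x] by (simp add: sum_diff1 t_def)
      also have "kuhn_vertices \<pi> 1 = \<pi> 1" by (simp add: kuhn_vertices_def)
      also have "kuhn_vertices \<pi> 2 = \<pi> 1 + \<pi> 2" by (simp add: kuhn_vertices_def numeral_2_eq_2)
      finally have "(\<Sum>i\<in>?A. cf i *\<^sub>R kuhn_vertices \<pi> i) = x - t *\<^sub>R \<pi> 1 + ((t / 2) *\<^sub>R 0 + (t / 2) *\<^sub>R (\<pi> 1 + \<pi> 2))"
        by (simp add: kv0)
      moreover have "t *\<^sub>R \<pi> 1 = (t / 2) *\<^sub>R \<pi> 1 + (t / 2) *\<^sub>R \<pi> 1" by (simp add: scaleR_add_left[symmetric])
      ultimately show ?thesis by (simp add: p_def scaleR_add_right scaleR_diff_right algebra_simps)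
    qed
    have pF: "p \<in> ?F 1"
    proof -
      have "(\<Sum>i\<in>?A. cf i *\<^sub>R kuhn_vertices \<pi> i) \<in> ?F 1"
        by (rule convex_sum[OF fA convex_convex_hull s1]) (auto simp: cf_def t0 K_char1[OF bij x] intro: hull_inc)
      then show ?thesis using s2 by simp
    qed
    have ii: "\<pi> 1 \<bullet> \<pi> 1 = 1" "\<pi> 2 \<bullet> \<pi> 2 = 1" "\<pi> 1 \<bullet> \<pi> 2 = 0" "\<pi> 2 \<bullet> \<pi> 1 = 0"
      using pinner[OF bij, of 1 1] pinner[OF bij, of 2 2] pinner[OF bij, of 1 2] pinner[OF bij, of 2 1] n2 by auto
    have nd: "norm (\<pi> 1 - \<pi> 2) = sqrt 2" unfolding norm_eq_sqrt_inner using ii by (simp add: inner_diff_left inner_diff_right)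
    have "dist x p = t / 2 * sqrt 2" using t0 nd by (simp add: p_def dist_norm)
    also have "\<dots> = t / sqrt 2" by (simp add: real_div_sqrt field_simps)
    also have "\<dots> \<le> 1 / sqrt 2" using t1 by (simp add: divide_right_mono)
    finally show "infdist x (?F 1) \<le> 1 / sqrt 2" by (rule infdist_le2[OF pF])
  qed
  finally show ?thesis .
qed

lemma K_height_pos:
  assumes bij: "bij_betw \<pi> {1..n} Basis" and n1: "1 \<le> n"
  shows "0 < min_height n (kuhn_vertices \<pi>)"
proof -
  let ?K = "simplex_set n (kuhn_vertices \<pi>)"
  let ?F = "\<lambda>i. convex hull (kuhn_vertices \<pi> ` ({..n} - {i}))"
  have "0 < (SUP x\<in>?K. infdist x (?F i))" if i: "i \<le> n" for i
  proof -
    define j where "j = (if i = 0 then 1 else 0::nat)"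
    have j: "j \<le> n" "j \<noteq> i" using n1 by (auto simp: j_def)
    have jF: "kuhn_vertices \<pi> j \<in> ?F i" by (rule hull_inc) (use j in auto)
    have Fne: "?F i \<noteq> {}" using jF by blast
    have bdd: "bdd_above ((\<lambda>x. infdist x (?F i)) ` ?K)"
    proof -
      have "infdist x (?F i) \<le> diameter ?K" if x: "x \<in> ?K" for x
      proof -
        have "infdist x (?F i) \<le> dist x (kuhn_vertices \<pi> j)" by (rule infdist_le[OF jF])
        also have "\<dots> \<le> diameter ?K" by (rule diameter_bounded_bound[OF simplex_bounded x kv_in[OF j(1)]])
        finally show ?thesis .
      qed
      then show ?thesis by (auto simp: bdd_above_def)
    qed
    have "1/2 \<le> infdist (kuhn_vertices \<pi> i) (?F i)"
      unfolding infdist_notempty[OF Fne]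
    proof (rule cINF_greatest[OF Fne])
      fix y assume y: "y \<in> ?F i"
      have "\<bar>ff n \<pi> i (kuhn_vertices \<pi> i) - ff n \<pi> i y\<bar> \<le> 2 * dist (kuhn_vertices \<pi> i) y" by (rule ff_lip[OF bij])
      then show "1/2 \<le> dist (kuhn_vertices \<pi> i) y" using ff_kv[OF bij i, of i] face_zero[OF bij i y] by simp
    qed
    also have "\<dots> \<le> (SUP x\<in>?K. infdist x (?F i))" by (rule cSUP_upper[OF kv_in[OF i] bdd])
    finally show ?thesis by simp
  qed
  then show ?thesis unfolding min_height_def by (subst Min_gr_iff) auto
qed

lemma ring_aux:
  fixes a b x :: real
  assumes "a * a = x" "b * b = 2"
  shows "2 * (a * (2 + (x - 1) * b) / 2) * (a * b) = x * (2 * b + (x - 1) * 2)"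
proof -
  have "2 * (a * (2 + (x - 1) * b) / 2) * (a * b) = (a * a) * (2 * b + (x - 1) * (b * b))"
    by (simp add: field_simps)
  then show ?thesis using assms by simp
qed

theorem lemmaA4:
  fixes T0 :: "'a::euclidean_space tsimplex" and \<pi> :: "nat \<Rightarrow> 'a" and n :: nat
  assumes "n = DIM('a)" and "n \<ge> 2"
    and "is_tagged_nsimplex n T0"
    and "bij_betw \<pi> {1..n} Basis"
    and "T \<in> maubach_desc n T0"
  shows "shape_reg (simplex_set n (fst T))
    \<le> 2 * shape_reg (simplex_set n (kuhn_vertices \<pi>))
        * (diameter (simplex_set n (kuhn_vertices \<pi>)) / min_height n (kuhn_vertices \<pi>))
        * shape_reg (simplex_set n (fst T0))"
proof -
  have n: "n = DIM('a)" and n2: "2 \<le> n" and tag: "is_tagged_nsimplex n T0"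
    and bij: "bij_betw \<pi> {1..n} Basis" and T: "T \<in> maubach_desc n T0" using assms by auto
  let ?K = "simplex_set n (kuhn_vertices \<pi>)"
  define RK where "RK = outer_diam ?K"
  define rK where "rK = inner_diam ?K"
  define dK where "dK = diameter ?K"
  define wK where "wK = min_height n (kuhn_vertices \<pi>)"
  define g0 where "g0 = shape_reg (simplex_set n (fst T0))"
  define D where "D = 2 + (real n - 1) * sqrt 2"
  have RK: "sqrt (real n) \<le> RK" unfolding RK_def by (rule K_outer[OF bij])
  have rK0: "0 < rK" unfolding rK_def by (rule K_inner_pos[OF bij]) (use n2 in simp)
  have rK1: "rK \<le> 2 / D" unfolding rK_def D_def by (rule K_inner_upper[OF bij n2])
  have dK: "sqrt (real n) \<le> dK" unfolding dK_def by (rule K_diam[OF bij])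
  have wK0: "0 < wK" unfolding wK_def by (rule K_height_pos[OF bij]) (use n2 in simp)
  have wK1: "wK \<le> 1 / sqrt 2" unfolding wK_def by (rule K_height_upper[OF bij n2])
  have D0: "0 < D" using n2 by (simp add: D_def add_pos_nonneg)
  have sn: "0 \<le> sqrt (real n)" by simp
  have g0: "0 \<le> g0"
  proof -
    have "0 \<le> outer_diam (simplex_set n (fst T0))" by (rule outer_diam_nonneg[OF simplex_bounded simplex_nonempty])
    moreover have "0 < inner_diam (simplex_set n (fst T0))"
      using simplex_inner_pos[OF n] tag by (simp add: is_tagged_nsimplex_def)
    ultimately show ?thesis by (simp add: g0_def shape_reg_def)
  qed
  have X: "sqrt (real n) * D / 2 \<le> RK / rK"
  proof -
    have "sqrt (real n) / (2 / D) \<le> sqrt (real n) / rK"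
      using rK0 rK1 sn D0 by (intro divide_left_mono) auto
    also have "\<dots> \<le> RK / rK" using RK rK0 by (intro divide_right_mono) auto
    finally show ?thesis using D0 by simp
  qed
  have Y: "sqrt (real n) * sqrt 2 \<le> dK / wK"
  proof -
    have "sqrt (real n) / (1 / sqrt 2) \<le> sqrt (real n) / wK"
      using wK0 wK1 sn by (intro divide_left_mono) auto
    also have "\<dots> \<le> dK / wK" using dK wK0 by (intro divide_right_mono) auto
    finally show ?thesis by simp
  qed
  have Z: "25/16 * (real n)^2 \<le> 2 * (sqrt (real n) * D / 2) * (sqrt (real n) * sqrt 2)"
  proof -
    have e: "2 * (sqrt (real n) * D / 2) * (sqrt (real n) * sqrt 2) = real n * (2 * sqrt 2 + (real n - 1) * 2)"
      unfolding D_def by (rule ring_aux) simp_all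
    have "1 \<le> sqrt (2::real)" by simp
    then have "real n * (2 + (real n - 1) * 2) \<le> real n * (2 * sqrt 2 + (real n - 1) * 2)"
      by (intro mult_left_mono) auto
    moreover have "real n * (2 + (real n - 1) * 2) = 2 * (real n)^2" by (simp add: power2_eq_square algebra_simps)
    moreover have "0 \<le> (real n)^2" by simp
    ultimately have "25/16 * (real n)^2 \<le> real n * (2 * sqrt 2 + (real n - 1) * 2)" by linarith
    then show ?thesis using e by linarith
  qed
  have C: "25/16 * (real n)^2 \<le> 2 * (RK / rK) * (dK / wK)"
  proof -
    have "(sqrt (real n) * D / 2) * (sqrt (real n) * sqrt 2) \<le> (RK / rK) * (dK / wK)"
    proof (rule mult_mono[OF X Y])
      have "0 \<le> RK" using RK sn by linarith
      then show "0 \<le> RK / rK" using rK0 by simp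
      show "0 \<le> sqrt (real n) * sqrt 2" by simp
    qed
    then have "2 * ((sqrt (real n) * D / 2) * (sqrt (real n) * sqrt 2)) \<le> 2 * ((RK / rK) * (dK / wK))" by linarith
    then show ?thesis using Z by (simp only: mult.assoc)
  qed
  have "shape_reg (simplex_set n (fst T)) \<le> 25/16 * (real n)^2 * g0"
    unfolding g0_def by (rule lhs_bound[OF n tag T])
  also have "\<dots> \<le> 2 * (RK / rK) * (dK / wK) * g0" using C g0 by (rule mult_right_mono)
  finally show ?thesis by (simp add: RK_def rK_def dK_def wK_def g0_def shape_reg_def)
qed


end
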